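(* Let $\underline p^\infty(q):=\sup_{\sigma\in\Sigma}\inf_{\xi\in\Xi}P_{\rm reach}(Q_{\rm safe},Q_{\rm tgt},\infty\mid q,\sigma,\xi)$, $Q_{\rm reach}:=\{q:\underline p^\infty(q)>0\}$, and $A^*(q):=\arg\max_{a\in A}\min_{\gamma\in\Gamma_{q,a}}\sum_{q'}\gamma(q')\underline p^\infty(q')$. Let $Q^0:=Q_{\rm tgt}$ and for $m\ge1$ $$Q^m:=Q^{m-1}\cup\Big\{q\in Q\setminus Q^{m-1}:\exists a\in A^*(q)\ \text{with}\ \min_{\gamma\in\Gamma_{q,a}}\sum_{q'\in Q^{m-1}}\gamma(q')>0\Big\},$$ and $m_{\max}:=\min\{m\ge1:Q^m=Q^{m-1}\}$. Let $\sigma^*\in\Sigma_s$ be a stationary strategy such that for every $m\in\{1,\dots,m_{\max}\}$ and every $q\in Q^m\setminus Q^{m-1}$, $$\sigma^*(q)\in\Big\{a\in A^*(q):\min_{\gamma\in\Gamma_{q,a}}\sum_{q'\in Q^{m-1}}\gamma(q')>0\Big\},$$ with arbitrary actions at states $q\in Q_{\rm tgt}\cup(Q\setminus Q_{\rm reach})$. Then $\sigma^*$ is proper and optimal: for every $q\in Q$, $\inf_{\xi\in\Xi}P_{\rm reach}(Q_{\rm safe},Q_{\rm tgt},\infty\mid q,\sigma^*,\xi)=\underline p^\infty(q)$, and $\lim_{k\to\infty}\widetilde P^{q,\sigma^*}_\xi[\omega(k)\in Q_{\rm reach}]=0$ for every adversary $\xi$ of $\widetilde{\mathcal M}$.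
   Context: Fix $n\ge1$, $s\ge1$, $\varepsilon\ge0$, a finite mode set $U=\{1,\dots,m\}$, continuous $f_u:\mathbb R^n\to\mathbb R^n$ ($u\in U$), and a Borel probability $\widehat p_v$ on $\mathbb R^n$ with finite $s$-th moment; $T^u_{p_v}(B\mid x):=p_v(\{v:f_u(x)+v\in B\})$. Abstraction. $X\subset\mathbb R^n$ bounded Borel, $X_{\rm tgt}\subset X$; $Q_{\rm safe}$ a finite family of pairwise disjoint Borel sets with union $X$, each either contained in or disjoint from $X_{\rm tgt}$; $Q_{\rm tgt}$ those contained in $X_{\rm tgt}$; $q_u:=\mathbb R^n\setminus X$; $Q:=Q_{\rm safe}\cup\{q_u\}$; $A:=U$. Bounds $\underline P\le\overline P$ in $[0,1]$ on $Q\times A\times Q$ with $\sum_{q'}\underline P(q,a,q')\le1\le\sum_{q'}\overline P(q,a,q')$, $\underline P(q,a,q')\le\inf_{x\in q}T^a_{\widehat p_v}(q'\mid x)$, $\overline P(q,a,q')\ge\sup_{x\in q}T^a_{\widehat p_v}(q'\mid x)$ for $q\in Q_{\rm safe}$, and $\underline P(q_u,a,q_u)=\overline P(q_u,a,q_u)=1$. $\widehat\Gamma_{q,a}:=\{\gamma\in\mathcal D(Q):\underline P(q,a,\cdot)\le\gamma\le\overline P(q,a,\cdot)\}$. With $c(q,q'):=\inf\{\|x-y\|^s:x\in q,y\in q'\}$ and $\mathcal T_c(\gamma,\gamma')$ the minimal $c$-transport cost over couplings of $\gamma,\gamma'\in\mathcal D(Q)$, $\Gamma_{q,a}:=\{\gamma:\exists\widehat\gamma\in\widehat\Gamma_{q,a},\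 \mathcal T_c(\gamma,\widehat\gamma)\le\varepsilon^s\}$ for $q\in Q_{\rm safe}$, and $\Gamma_{q_u,a}:=\widehat\Gamma_{q_u,a}$. This is the robust MDP $\mathcal M=(Q,A,\Gamma)$. Semantics. Strategies $\sigma\in\Sigma$ map finite paths to actions; $\Sigma_s$ are the stationary ones. Adversaries $\xi\in\Xi$ map each finite path $\omega^k$ and action $a$ to a distribution in $\Gamma_{\mathrm{last}(\omega^k),a}$. $P^{q,\sigma}_\xi$ is the path measure with $\omega(0)=q$ and $P[\omega(k+1)=q'\mid\omega^k]=\xi(\omega^k,\sigma(\omega^k))(q')$. $P_{\rm reach}(Q_{\rm safe},Q_{\rm tgt},\infty\mid q,\sigma,\xi):=P^{q,\sigma}_\xi[\exists k\ge0:\omega(k)\in Q_{\rm tgt}\wedge\forall k'<k,\ \omega(k')\in Q_{\rm safe}]$. Modified robust MDP. $\widetilde{\mathcal M}=(Q,A,\widetilde\Gamma)$ with $\widetilde\Gamma_{q,a}:=\{\delta_{q_u}\}$ for $q\in Q_{\rm tgt}$ and $\widetilde\Gamma_{q,a}:=\Gamma_{q,a}$ otherwise. Its adversaries choose distributions from $\widetilde\Gamma$, and $\widetilde P^{q,\sigma}_\xi$ is the corresponding path measure. A stationary strategy is called proper if it satisfies the limit condition stated in the claim for all $q$ and all adversaries of $\widetilde{\mathcal M}$. *)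

theory Defs
  imports "HOL-Probability.Probability"
begin

definition distr :: "'q set \<Rightarrow> ('q \<Rightarrow> real) set" where
  "distr Q = {\<gamma>. (\<forall>x. 0 \<le> \<gamma> x) \<and> (\<forall>x. x \<notin> Q \<longrightarrow> \<gamma> x = 0) \<and> sum \<gamma> Q = 1}"

definition dirac :: "'q \<Rightarrow> 'q \<Rightarrow> real" where
  "dirac q0 = (\<lambda>x. if x = q0 then 1 else 0)"

text \<open>Strategies: maps from finite paths (lists, first entry omega(0)) to actions in A.\<close>
definition strategies :: "'a set \<Rightarrow> ('q list \<Rightarrow> 'a) set" where
  "strategies A = {\<sigma>. \<forall>w. \<sigma> w \<in> A}"

definition stationary :: "('q \<Rightarrow> 'a) \<Rightarrow> ('q list \<Rightarrow> 'a)" where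
  "stationary \<sigma>s = (\<lambda>w. \<sigma>s (last w))"

definition adversaries ::
  "'q set \<Rightarrow> 'a set \<Rightarrow> ('q \<Rightarrow> 'a \<Rightarrow> ('q \<Rightarrow> real) set) \<Rightarrow> ('q list \<Rightarrow> 'a \<Rightarrow> 'q \<Rightarrow> real) set" where
  "adversaries Q A \<Gamma> = {\<xi>. \<forall>w a. w \<noteq> [] \<and> set w \<subseteq> Q \<and> a \<in> A \<longrightarrow> \<xi> w a \<in> \<Gamma> (last w) a}"

definition paths :: "'q set \<Rightarrow> 'q \<Rightarrow> nat \<Rightarrow> 'q list set" where
  "paths Q q k = {w. length w = Suc k \<and> hd w = q \<and> set w \<subseteq> Q}"

text \<open>Probability under the path measure of the cylinder given by a finite path
  (the path measure is determined by these finite-dimensional distributions).\<close>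
definition path_prob :: "('q list \<Rightarrow> 'a) \<Rightarrow> ('q list \<Rightarrow> 'a \<Rightarrow> 'q \<Rightarrow> real) \<Rightarrow> 'q list \<Rightarrow> real" where
  "path_prob \<sigma> \<xi> w = (\<Prod>i\<in>{1..<length w}. \<xi> (take i w) (\<sigma> (take i w)) (w ! i))"

definition reach_within ::
  "'q set \<Rightarrow> 'q set \<Rightarrow> 'q set \<Rightarrow> ('q list \<Rightarrow> 'a) \<Rightarrow> ('q list \<Rightarrow> 'a \<Rightarrow> 'q \<Rightarrow> real) \<Rightarrow> 'q \<Rightarrow> nat \<Rightarrow> real" where
  "reach_within Q Qsafe Qtgt \<sigma> \<xi> q k =
     (\<Sum>w\<in>paths Q q k. if (\<exists>j\<le>k. w ! j \<in> Qtgt \<and> (\<forall>j'<j. w ! j' \<in> Qsafe)) then path_prob \<sigma> \<xi> w else 0)"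

text \<open>Unbounded-horizon reach probability P_reach(Qsafe, Qtgt, infinity | q, sigma, xi),
  obtained by continuity of the path measure from the increasing finite-horizon events.\<close>
definition P_reach ::
  "'q set \<Rightarrow> 'q set \<Rightarrow> 'q set \<Rightarrow> 'q \<Rightarrow> ('q list \<Rightarrow> 'a) \<Rightarrow> ('q list \<Rightarrow> 'a \<Rightarrow> 'q \<Rightarrow> real) \<Rightarrow> real" where
  "P_reach Q Qsafe Qtgt q \<sigma> \<xi> = (SUP k. reach_within Q Qsafe Qtgt \<sigma> \<xi> q k)"

definition prob_at ::
  "'q set \<Rightarrow> ('q list \<Rightarrow> 'a) \<Rightarrow> ('q list \<Rightarrow> 'a \<Rightarrow> 'q \<Rightarrow> real) \<Rightarrow> 'q \<Rightarrow> nat \<Rightarrow> 'q set \<Rightarrow> real" where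
  "prob_at Q \<sigma> \<xi> q k S = (\<Sum>w\<in>paths Q q k. if last w \<in> S then path_prob \<sigma> \<xi> w else 0)"

definition p_low ::
  "'q set \<Rightarrow> 'a set \<Rightarrow> ('q \<Rightarrow> 'a \<Rightarrow> ('q \<Rightarrow> real) set) \<Rightarrow> 'q set \<Rightarrow> 'q set \<Rightarrow> 'q \<Rightarrow> real" where
  "p_low Q A \<Gamma> Qsafe Qtgt q =
     (SUP \<sigma>\<in>strategies A. INF \<xi>\<in>adversaries Q A \<Gamma>. P_reach Q Qsafe Qtgt q \<sigma> \<xi>)"

primrec Qlev :: "'q set \<Rightarrow> ('q \<Rightarrow> 'a \<Rightarrow> ('q \<Rightarrow> real) set) \<Rightarrow> ('q \<Rightarrow> 'a set) \<Rightarrow> 'q set \<Rightarrow> nat \<Rightarrow> 'q set" where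
  "Qlev Q \<Gamma> Ast Q0 0 = Q0"
| "Qlev Q \<Gamma> Ast Q0 (Suc k) = Qlev Q \<Gamma> Ast Q0 k \<union>
     {q \<in> Q - Qlev Q \<Gamma> Ast Q0 k. \<exists>a\<in>Ast q. (INF \<gamma>\<in>\<Gamma> q a. \<Sum>q'\<in>Qlev Q \<Gamma> Ast Q0 k. \<gamma> q') > 0}"

definition opt_actions :: "'q set \<Rightarrow> 'a set \<Rightarrow> ('q \<Rightarrow> 'a \<Rightarrow> ('q \<Rightarrow> real) set) \<Rightarrow> ('q \<Rightarrow> real) \<Rightarrow> 'q \<Rightarrow> 'a set" where
  "opt_actions Q A \<Gamma> p q = {a\<in>A. \<forall>b\<in>A. (INF \<gamma>\<in>\<Gamma> q b. \<Sum>q'\<in>Q. \<gamma> q' * p q')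
                                   \<le> (INF \<gamma>\<in>\<Gamma> q a. \<Sum>q'\<in>Q. \<gamma> q' * p q')}"

definition trans_prob :: "('v::real_normed_vector \<Rightarrow> 'v) \<Rightarrow> 'v measure \<Rightarrow> 'v set \<Rightarrow> 'v \<Rightarrow> real" where
  "trans_prob fu p B x = measure p {v. fu x + v \<in> B}"

definition set_cost :: "real \<Rightarrow> 'v::real_normed_vector set \<Rightarrow> 'v set \<Rightarrow> real" where
  "set_cost s q q' = Inf {norm (x - y) powr s | x y. x \<in> q \<and> y \<in> q'}"

definition couplings :: "'q set \<Rightarrow> ('q \<Rightarrow> real) \<Rightarrow> ('q \<Rightarrow> real) \<Rightarrow> ('q \<Rightarrow> 'q \<Rightarrow> real) set" where
  "couplings Q \<gamma> \<gamma>' = {\<pi>. (\<forall>x y. 0 \<le> \<pi> x y) \<and> (\<forall>x y. (x, y) \<notin> Q \<times> Q \<longrightarrow> \<pi> x y = 0)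
       \<and> (\<forall>x\<in>Q. (\<Sum>y\<in>Q. \<pi> x y) = \<gamma> x) \<and> (\<forall>y\<in>Q. (\<Sum>x\<in>Q. \<pi> x y) = \<gamma>' y)}"

definition transport_cost :: "'q set \<Rightarrow> ('q \<Rightarrow> 'q \<Rightarrow> real) \<Rightarrow> ('q \<Rightarrow> real) \<Rightarrow> ('q \<Rightarrow> real) \<Rightarrow> real" where
  "transport_cost Q c \<gamma> \<gamma>' = Inf {\<Sum>x\<in>Q. \<Sum>y\<in>Q. \<pi> x y * c x y | \<pi>. \<pi> \<in> couplings Q \<gamma> \<gamma>'}"

definition Gamma_hat :: "'q set \<Rightarrow> ('q \<Rightarrow> 'a \<Rightarrow> 'q \<Rightarrow> real) \<Rightarrow> ('q \<Rightarrow> 'a \<Rightarrow> 'q \<Rightarrow> real) \<Rightarrow> 'q \<Rightarrow> 'a \<Rightarrow> ('q \<Rightarrow> real) set" where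
  "Gamma_hat Q Pl Pu q a = {\<gamma> \<in> distr Q. \<forall>q'\<in>Q. Pl q a q' \<le> \<gamma> q' \<and> \<gamma> q' \<le> Pu q a q'}"

definition Gamma_amb :: "'q set \<Rightarrow> 'q set \<Rightarrow> ('q \<Rightarrow> 'q \<Rightarrow> real) \<Rightarrow> real \<Rightarrow> real \<Rightarrow>
     ('q \<Rightarrow> 'a \<Rightarrow> 'q \<Rightarrow> real) \<Rightarrow> ('q \<Rightarrow> 'a \<Rightarrow> 'q \<Rightarrow> real) \<Rightarrow> 'q \<Rightarrow> 'a \<Rightarrow> ('q \<Rightarrow> real) set" where
  "Gamma_amb Q Qsafe c eps s Pl Pu q a =
     (if q \<in> Qsafe then {\<gamma> \<in> distr Q. \<exists>\<gamma>h\<in>Gamma_hat Q Pl Pu q a. transport_cost Q c \<gamma> \<gamma>h \<le> eps powr s}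
      else Gamma_hat Q Pl Pu q a)"

end

theory Submission
  imports Defs
begin

definition ppK :: "('q list \<Rightarrow> 'q \<Rightarrow> real) \<Rightarrow> 'q list \<Rightarrow> real" where
  "ppK K w = (\<Prod>i\<in>{1..<length w}. K (take i w) (w ! i))"

definition shK :: "'q \<Rightarrow> ('q list \<Rightarrow> 'q \<Rightarrow> real) \<Rightarrow> ('q list \<Rightarrow> 'q \<Rightarrow> real)" where
  "shK q K = (\<lambda>w. K (q # w))"

definition good :: "'q set \<Rightarrow> ('q list \<Rightarrow> 'q \<Rightarrow> real) \<Rightarrow> bool" where
  "good Q K \<longleftrightarrow> (\<forall>w. w \<noteq> [] \<longrightarrow> set w \<subseteq> Q \<longrightarrow> K w \<in> distr Q)"

definition rwK :: "'q set \<Rightarrow> 'q set \<Rightarrow> 'q set \<Rightarrow> ('q list \<Rightarrow> 'q \<Rightarrow> real) \<Rightarrow> 'q \<Rightarrow> nat \<Rightarrow> real" where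
  "rwK Q Qs T K q k = (\<Sum>w\<in>paths Q q k. if (\<exists>j\<le>k. w ! j \<in> T \<and> (\<forall>j'<j. w ! j' \<in> Qs)) then ppK K w else 0)"

definition paK :: "'q set \<Rightarrow> ('q list \<Rightarrow> 'q \<Rightarrow> real) \<Rightarrow> 'q \<Rightarrow> nat \<Rightarrow> 'q set \<Rightarrow> real" where
  "paK Q K q k S = (\<Sum>w\<in>paths Q q k. if last w \<in> S then ppK K w else 0)"

lemma path_prob_eq: "path_prob \<sigma> \<xi> = ppK (\<lambda>w. \<xi> w (\<sigma> w))"
  by (simp add: path_prob_def ppK_def fun_eq_iff)

lemma reach_within_eq: "reach_within Q Qs T \<sigma> \<xi> q k = rwK Q Qs T (\<lambda>w. \<xi> w (\<sigma> w)) q k"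
  unfolding reach_within_def rwK_def path_prob_def ppK_def by (rule refl)

lemma prob_at_eq: "prob_at Q \<sigma> \<xi> q k S = paK Q (\<lambda>w. \<xi> w (\<sigma> w)) q k S"
  unfolding prob_at_def paK_def path_prob_def ppK_def by (rule refl)

lemma paths_0: "paths Q q 0 = (if q \<in> Q then {[q]} else {})"
  by (auto simp: paths_def length_Suc_conv)

lemma paths_finite: "finite Q \<Longrightarrow> finite (paths Q q k)"
proof -
  assume "finite Q"
  have "paths Q q k \<subseteq> {w. set w \<subseteq> Q \<and> length w = Suc k}" by (auto simp: paths_def)
  moreover have "finite {w. set w \<subseteq> Q \<and> length w = Suc k}"
    using finite_lists_length_eq[OF \<open>finite Q\<close>] by simp
  ultimately show ?thesis by (rule finite_subset)
qed

lemma paths_Suc: "q \<in> Q \<Longrightarrow> paths Q q (Suc k) = (\<lambda>v. q # v) ` (\<Union>q'\<in>Q. paths Q q' k)"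
proof (rule set_eqI, rule iffI)
  fix w assume q: "q \<in> Q" and w: "w \<in> paths Q q (Suc k)"
  then obtain v where v: "w = q # v" by (cases w) (auto simp: paths_def)
  with w have lv: "length v = Suc k" and sv: "set v \<subseteq> Q" by (auto simp: paths_def)
  then have "v \<noteq> []" by auto
  then have "hd v \<in> Q" using sv hd_in_set by blast
  moreover have "v \<in> paths Q (hd v) k" using lv sv by (simp add: paths_def)
  ultimately have "v \<in> paths Q (hd v) k" "hd v \<in> Q" by blast+
  then show "w \<in> (\<lambda>v. q # v) ` (\<Union>q'\<in>Q. paths Q q' k)" using v by blast
next
  fix w assume "q \<in> Q" "w \<in> (\<lambda>v. q # v) ` (\<Union>q'\<in>Q. paths Q q' k)"
  then show "w \<in> paths Q q (Suc k)" by (auto simp: paths_def)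
qed

lemma sum_paths_Suc:
  assumes "finite Q" "q \<in> Q"
  shows "(\<Sum>w\<in>paths Q q (Suc k). F w) = (\<Sum>q'\<in>Q. \<Sum>v\<in>paths Q q' k. F (q # v))"
proof -
  have "(\<Sum>w\<in>paths Q q (Suc k). F w) = (\<Sum>w\<in>(\<lambda>v. q # v) ` (\<Union>q'\<in>Q. paths Q q' k). F w)"
    using paths_Suc[OF assms(2)] by simp
  also have "\<dots> = (\<Sum>v\<in>(\<Union>q'\<in>Q. paths Q q' k). F (q # v))"
    by (subst sum.reindex) (auto simp: inj_on_def)
  also have "\<dots> = (\<Sum>q'\<in>Q. \<Sum>v\<in>paths Q q' k. F (q # v))"
  proof (rule sum.UNION_disjoint)
    show "finite Q" by (rule assms(1))
    show "\<forall>i\<in>Q. finite (paths Q i k)" using paths_finite[OF assms(1)] by blast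
    show "\<forall>i\<in>Q. \<forall>j\<in>Q. i \<noteq> j \<longrightarrow> paths Q i k \<inter> paths Q j k = {}"
      by (auto simp: paths_def)
  qed
  finally show ?thesis .
qed

lemma ppK_Cons: "v \<noteq> [] \<Longrightarrow> ppK K (q # v) = K [q] (hd v) * ppK (shK q K) v"
proof -
  assume v: "v \<noteq> []"
  have "ppK K (q # v) = (\<Prod>i\<in>{1..<Suc (length v)}. K (take i (q # v)) ((q # v) ! i))"
    by (simp add: ppK_def)
  also have "\<dots> = K (take 1 (q # v)) ((q # v) ! 1) * (\<Prod>i\<in>{Suc 1..<Suc (length v)}. K (take i (q # v)) ((q # v) ! i))"
    using v by (subst prod.atLeast_Suc_lessThan) auto
  also have "(\<Prod>i\<in>{Suc 1..<Suc (length v)}. K (take i (q # v)) ((q # v) ! i))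
      = (\<Prod>i\<in>{1..<length v}. K (take (Suc i) (q # v)) ((q # v) ! Suc i))"
    by (rule prod.shift_bounds_Suc_ivl)
  also have "\<dots> = ppK (shK q K) v" by (simp add: ppK_def shK_def)
  finally show ?thesis using v by (simp add: hd_conv_nth)
qed

lemma good_sh: "good Q K \<Longrightarrow> q \<in> Q \<Longrightarrow> good Q (shK q K)"
  by (auto simp: good_def shK_def)

lemma distr_nonneg: "\<gamma> \<in> distr Q \<Longrightarrow> 0 \<le> \<gamma> x" by (simp add: distr_def)
lemma distr_sum: "\<gamma> \<in> distr Q \<Longrightarrow> sum \<gamma> Q = 1" by (simp add: distr_def)
lemma distr_out: "\<gamma> \<in> distr Q \<Longrightarrow> x \<notin> Q \<Longrightarrow> \<gamma> x = 0" by (simp add: distr_def)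
lemma distr_le1: "finite Q \<Longrightarrow> \<gamma> \<in> distr Q \<Longrightarrow> \<gamma> x \<le> 1"
proof -
  assume f: "finite Q" and g: "\<gamma> \<in> distr Q"
  show ?thesis
  proof (cases "x \<in> Q")
    case True
    have "\<gamma> x \<le> sum \<gamma> Q"
      by (rule member_le_sum) (use True f g distr_nonneg in auto)
    then show ?thesis using distr_sum[OF g] by simp
  next
    case False
    then show ?thesis using g distr_out by fastforce
  qed
qed

lemma ppK_nonneg:
  assumes "good Q K" "set w \<subseteq> Q"
  shows "0 \<le> ppK K w"
  unfolding ppK_def
proof (rule prod_nonneg)
  fix i assume i: "i \<in> {1..<length w}"
  then have "take i w \<noteq> []" by auto
  moreover have "set (take i w) \<subseteq> Q" using assms(2) set_take_subset by (metis order_trans)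
  ultimately show "0 \<le> K (take i w) (w ! i)" using assms(1) by (auto simp: good_def distr_def)
qed

lemma mass:
  assumes "finite Q" "good Q K" "q \<in> Q"
  shows "(\<Sum>w\<in>paths Q q k. ppK K w) = 1"
  using assms(2,3)
proof (induction k arbitrary: K q)
  case 0
  then show ?case by (simp add: paths_0 ppK_def)
next
  case (Suc k)
  have "(\<Sum>w\<in>paths Q q (Suc k). ppK K w) = (\<Sum>q'\<in>Q. \<Sum>v\<in>paths Q q' k. ppK K (q # v))"
    by (rule sum_paths_Suc[OF assms(1) Suc.prems(2)])
  also have "\<dots> = (\<Sum>q'\<in>Q. K [q] q' * (\<Sum>v\<in>paths Q q' k. ppK (shK q K) v))"
  proof (rule sum.cong[OF refl])
    fix q' assume "q' \<in> Q"
    have "(\<Sum>v\<in>paths Q q' k. ppK K (q # v)) = (\<Sum>v\<in>paths Q q' k. K [q] q' * ppK (shK q K) v)"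
    proof (rule sum.cong[OF refl])
      fix v assume "v \<in> paths Q q' k"
      then have "v \<noteq> []" "hd v = q'" by (auto simp: paths_def)
      then show "ppK K (q # v) = K [q] q' * ppK (shK q K) v" using ppK_Cons by metis
    qed
    then show "(\<Sum>v\<in>paths Q q' k. ppK K (q # v)) = K [q] q' * (\<Sum>v\<in>paths Q q' k. ppK (shK q K) v)"
      by (simp add: sum_distrib_left)
  qed
  also have "\<dots> = (\<Sum>q'\<in>Q. K [q] q')"
    using Suc.IH[OF good_sh[OF Suc.prems(1,2)]] by simp
  also have "\<dots> = 1" using Suc.prems by (auto simp: good_def distr_def)
  finally show ?case .
qed

lemma sum_if_ppK_bounds:
  assumes "finite Q" "good Q K" "q \<in> Q"
  shows "0 \<le> (\<Sum>w\<in>paths Q q k. if P w then ppK K w else 0)"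
    and "(\<Sum>w\<in>paths Q q k. if P w then ppK K w else 0) \<le> 1"
proof -
  have nn: "\<And>w. w \<in> paths Q q k \<Longrightarrow> 0 \<le> ppK K w"
    using assms(2) ppK_nonneg by (auto simp: paths_def)
  show "0 \<le> (\<Sum>w\<in>paths Q q k. if P w then ppK K w else 0)"
    by (rule sum_nonneg) (use nn in auto)
  have "(\<Sum>w\<in>paths Q q k. if P w then ppK K w else 0) \<le> (\<Sum>w\<in>paths Q q k. ppK K w)"
    by (rule sum_mono) (use nn in auto)
  then show "(\<Sum>w\<in>paths Q q k. if P w then ppK K w else 0) \<le> 1"
    using mass[OF assms] by simp
qed

lemma rwK_bounds:
  assumes "finite Q" "good Q K" "q \<in> Q"
  shows "0 \<le> rwK Q Qs T K q k" "rwK Q Qs T K q k \<le> 1"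
  unfolding rwK_def by (rule sum_if_ppK_bounds[OF assms])+

lemma paK_bounds:
  assumes "finite Q" "good Q K" "q \<in> Q"
  shows "0 \<le> paK Q K q k S" "paK Q K q k S \<le> 1"
  unfolding paK_def by (rule sum_if_ppK_bounds[OF assms])+

lemma rwK_T:
  assumes "finite Q" "good Q K" "q \<in> Q" "q \<in> T"
  shows "rwK Q Qs T K q k = 1"
proof -
  have "rwK Q Qs T K q k = (\<Sum>w\<in>paths Q q k. ppK K w)"
    unfolding rwK_def
  proof (rule sum.cong[OF refl])
    fix w assume "w \<in> paths Q q k"
    then have "w ! 0 = q" by (cases w) (auto simp: paths_def)
    then show "(if \<exists>j\<le>k. w ! j \<in> T \<and> (\<forall>j'<j. w ! j' \<in> Qs) then ppK K w else 0) = ppK K w"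
      using assms(4) by auto
  qed
  then show ?thesis using mass[OF assms(1-3)] by simp
qed

lemma rwK_unsafe:
  assumes "T \<subseteq> Qs" "q \<notin> Qs"
  shows "rwK Q Qs T K q k = 0"
proof -
  have "rwK Q Qs T K q k = (\<Sum>w\<in>paths Q q k. 0)"
    unfolding rwK_def
  proof (rule sum.cong[OF refl])
    fix w assume "w \<in> paths Q q k"
    then have w0: "w ! 0 = q" by (cases w) (auto simp: paths_def)
    have "\<not> (\<exists>j\<le>k. w ! j \<in> T \<and> (\<forall>j'<j. w ! j' \<in> Qs))"
    proof
      assume "\<exists>j\<le>k. w ! j \<in> T \<and> (\<forall>j'<j. w ! j' \<in> Qs)"
      then obtain j where j: "w ! j \<in> T" "\<forall>j'<j. w ! j' \<in> Qs" by blast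
      show False
      proof (cases j)
        case 0 then show ?thesis using j w0 assms by auto
      next
        case (Suc i) then show ?thesis using j(2)[rule_format, of 0] w0 assms by auto
      qed
    qed
    then show "(if \<exists>j\<le>k. w ! j \<in> T \<and> (\<forall>j'<j. w ! j' \<in> Qs) then ppK K w else 0) = 0" by (rule if_not_P)
  qed
  then show ?thesis by simp
qed

lemma rwK_0:
  assumes "q \<notin> T"
  shows "rwK Q Qs T K q 0 = 0"
  using assms by (auto simp: rwK_def paths_0 intro!: sum.neutral)

lemma cond_Cons:
  assumes "q \<notin> T" "q \<in> Qs"
  shows "(\<exists>j\<le>Suc k. (q # v) ! j \<in> T \<and> (\<forall>j'<j. (q # v) ! j' \<in> Qs))
     \<longleftrightarrow> (\<exists>j\<le>k. v ! j \<in> T \<and> (\<forall>j'<j. v ! j' \<in> Qs))"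
proof
  assume "\<exists>j\<le>Suc k. (q # v) ! j \<in> T \<and> (\<forall>j'<j. (q # v) ! j' \<in> Qs)"
  then obtain j where j: "j \<le> Suc k" "(q # v) ! j \<in> T" "\<forall>j'<j. (q # v) ! j' \<in> Qs" by blast
  then obtain i where i: "j = Suc i" using assms by (cases j) auto
  have "\<forall>j'<i. v ! j' \<in> Qs"
  proof (intro allI impI)
    fix j' assume "j' < i"
    then show "v ! j' \<in> Qs" using j(3)[rule_format, of "Suc j'"] i by simp
  qed
  then show "\<exists>j\<le>k. v ! j \<in> T \<and> (\<forall>j'<j. v ! j' \<in> Qs)" using j i by auto
next
  assume "\<exists>j\<le>k. v ! j \<in> T \<and> (\<forall>j'<j. v ! j' \<in> Qs)"
  then obtain i where i: "i \<le> k" "v ! i \<in> T" "\<forall>j'<i. v ! j' \<in> Qs" by blast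
  have "\<forall>j'<Suc i. (q # v) ! j' \<in> Qs"
  proof (intro allI impI)
    fix j' assume "j' < Suc i"
    then show "(q # v) ! j' \<in> Qs" using i(3) assms by (cases j') auto
  qed
  then show "\<exists>j\<le>Suc k. (q # v) ! j \<in> T \<and> (\<forall>j'<j. (q # v) ! j' \<in> Qs)"
    using i by (intro exI[of _ "Suc i"]) auto
qed

lemma rwK_Suc:
  assumes "finite Q" "q \<in> Q" "q \<in> Qs" "q \<notin> T"
  shows "rwK Q Qs T K q (Suc k) = (\<Sum>q'\<in>Q. K [q] q' * rwK Q Qs T (shK q K) q' k)"
proof -
  have "rwK Q Qs T K q (Suc k) = (\<Sum>q'\<in>Q. \<Sum>v\<in>paths Q q' k.
      if (\<exists>j\<le>Suc k. (q # v) ! j \<in> T \<and> (\<forall>j'<j. (q # v) ! j' \<in> Qs)) then ppK K (q # v) else 0)"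
    unfolding rwK_def by (rule sum_paths_Suc[OF assms(1,2)])
  also have "\<dots> = (\<Sum>q'\<in>Q. K [q] q' * rwK Q Qs T (shK q K) q' k)"
  proof (rule sum.cong[OF refl])
    fix q' assume "q' \<in> Q"
    show "(\<Sum>v\<in>paths Q q' k.
      if (\<exists>j\<le>Suc k. (q # v) ! j \<in> T \<and> (\<forall>j'<j. (q # v) ! j' \<in> Qs)) then ppK K (q # v) else 0)
      = K [q] q' * rwK Q Qs T (shK q K) q' k"
      unfolding rwK_def sum_distrib_left
    proof (rule sum.cong[OF refl])
      fix v assume v: "v \<in> paths Q q' k"
      then have nv: "v \<noteq> []" and hv: "hd v = q'" by (auto simp: paths_def)
      note c = cond_Cons[OF assms(4,3), of k v]
      show "(if (\<exists>j\<le>Suc k. (q # v) ! j \<in> T \<and> (\<forall>j'<j. (q # v) ! j' \<in> Qs)) then ppK K (q # v) else 0)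
        = K [q] q' * (if \<exists>j\<le>k. v ! j \<in> T \<and> (\<forall>j'<j. v ! j' \<in> Qs) then ppK (shK q K) v else 0)"
        proof (cases "\<exists>j\<le>k. v ! j \<in> T \<and> (\<forall>j'<j. v ! j' \<in> Qs)")
          case True
          moreover have "\<exists>j\<le>Suc k. (q # v) ! j \<in> T \<and> (\<forall>j'<j. (q # v) ! j' \<in> Qs)" using c True by blast
          ultimately show ?thesis by (simp only: if_P ppK_Cons[OF nv, of K q] hv)
        next
          case False
          moreover have "\<not> (\<exists>j\<le>Suc k. (q # v) ! j \<in> T \<and> (\<forall>j'<j. (q # v) ! j' \<in> Qs))" using c False by blast
          ultimately show ?thesis by (simp only: if_not_P mult_zero_right if_False)
        qed
    qed
  qed
  finally show ?thesis .
qed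

lemma paK_0: "q \<in> Q \<Longrightarrow> paK Q K q 0 S = (if q \<in> S then 1 else 0)"
  by (simp add: paK_def paths_0 ppK_def)

lemma paK_Suc:
  assumes "finite Q" "q \<in> Q"
  shows "paK Q K q (Suc k) S = (\<Sum>q'\<in>Q. K [q] q' * paK Q (shK q K) q' k S)"
proof -
  have "paK Q K q (Suc k) S = (\<Sum>q'\<in>Q. \<Sum>v\<in>paths Q q' k.
      if last (q # v) \<in> S then ppK K (q # v) else 0)"
    unfolding paK_def by (rule sum_paths_Suc[OF assms(1,2)])
  also have "\<dots> = (\<Sum>q'\<in>Q. K [q] q' * paK Q (shK q K) q' k S)"
  proof (rule sum.cong[OF refl])
    fix q' assume "q' \<in> Q"
    show "(\<Sum>v\<in>paths Q q' k. if last (q # v) \<in> S then ppK K (q # v) else 0)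
      = K [q] q' * paK Q (shK q K) q' k S"
      unfolding paK_def sum_distrib_left
    proof (rule sum.cong[OF refl])
      fix v assume v: "v \<in> paths Q q' k"
      then have "v \<noteq> []" "hd v = q'" by (auto simp: paths_def)
      then show "(if last (q # v) \<in> S then ppK K (q # v) else 0)
        = K [q] q' * (if last v \<in> S then ppK (shK q K) v else 0)"
        by (simp add: ppK_Cons)
    qed
  qed
  finally show ?thesis .
qed

lemma ppK_cong:
  assumes "\<And>u. u \<noteq> [] \<Longrightarrow> set u \<subseteq> Q \<Longrightarrow> hd u = q \<Longrightarrow> K u = K' u"
    and "set w \<subseteq> Q" "hd w = q"
  shows "ppK K w = ppK K' w"
  unfolding ppK_def
proof (rule prod.cong[OF refl])
  fix i assume i: "i \<in> {1..<length w}"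
  then have "take i w \<noteq> []" by auto
  moreover have "set (take i w) \<subseteq> Q" by (meson assms(2) order_trans set_take_subset)
  moreover have "hd (take i w) = q" using i assms(3) by simp
  ultimately show "K (take i w) (w ! i) = K' (take i w) (w ! i)" using assms(1) by simp
qed

lemma rwK_cong:
  assumes "\<And>u. u \<noteq> [] \<Longrightarrow> set u \<subseteq> Q \<Longrightarrow> hd u = q \<Longrightarrow> K u = K' u"
  shows "rwK Q Qs T K q k = rwK Q Qs T K' q k"
  unfolding rwK_def
proof (rule sum.cong[OF refl])
  fix w assume "w \<in> paths Q q k"
  then have "set w \<subseteq> Q" "hd w = q" by (auto simp: paths_def)
  then have "ppK K w = ppK K' w" by (intro ppK_cong[where Q=Q and q=q]) (use assms in auto)
  then show "(if \<exists>j\<le>k. w ! j \<in> T \<and> (\<forall>j'<j. w ! j' \<in> Qs) then ppK K w else 0) =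
         (if \<exists>j\<le>k. w ! j \<in> T \<and> (\<forall>j'<j. w ! j' \<in> Qs) then ppK K' w else 0)" by (simp only:)
qed


definition Kof :: "('q list \<Rightarrow> 'a) \<Rightarrow> ('q list \<Rightarrow> 'a \<Rightarrow> 'q \<Rightarrow> real) \<Rightarrow> 'q list \<Rightarrow> 'q \<Rightarrow> real" where
  "Kof \<sigma> \<xi> = (\<lambda>w. \<xi> w (\<sigma> w))"

lemma shK_Kof: "shK q (Kof \<sigma> \<xi>) = Kof (\<lambda>w. \<sigma> (q # w)) (\<lambda>w. \<xi> (q # w))"
  by (simp add: shK_def Kof_def)

lemma Kof_Nil: "Kof \<sigma> \<xi> [q] = \<xi> [q] (\<sigma> [q])" by (simp add: Kof_def)

lemma sum_distr_abs:
  assumes "finite Q" "\<gamma> \<in> distr Q"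
  shows "\<bar>\<Sum>q'\<in>Q. \<gamma> q' * f q'\<bar> \<le> (\<Sum>q'\<in>Q. \<bar>f q'\<bar>)"
proof -
  have "\<bar>\<Sum>q'\<in>Q. \<gamma> q' * f q'\<bar> \<le> (\<Sum>q'\<in>Q. \<bar>\<gamma> q' * f q'\<bar>)" by (rule sum_abs)
  also have "\<dots> \<le> (\<Sum>q'\<in>Q. \<bar>f q'\<bar>)"
  proof (rule sum_mono)
    fix x assume "x \<in> Q"
    have "0 \<le> \<gamma> x" by (rule distr_nonneg[OF assms(2)])
    have "\<gamma> x \<le> 1" by (rule distr_le1[OF assms])
    then have "\<gamma> x * \<bar>f x\<bar> \<le> 1 * \<bar>f x\<bar>" by (intro mult_right_mono) auto
    then show "\<bar>\<gamma> x * f x\<bar> \<le> \<bar>f x\<bar>" using \<open>0 \<le> \<gamma> x\<close> by (simp add: abs_mult)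
  qed
  finally show ?thesis .
qed

lemma sum_distr_shift:
  assumes "\<gamma> \<in> distr Q"
  shows "(\<Sum>q'\<in>Q. \<gamma> q' * (f q' + c)) = (\<Sum>q'\<in>Q. \<gamma> q' * f q') + c"
proof -
  have "(\<Sum>q'\<in>Q. \<gamma> q' * (f q' + c)) = (\<Sum>q'\<in>Q. \<gamma> q' * f q') + (\<Sum>q'\<in>Q. \<gamma> q') * c"
    by (simp add: distrib_left sum.distrib sum_distrib_right)
  then show ?thesis using distr_sum[OF assms] by simp
qed

lemma sum_distr_mono:
  assumes "\<gamma> \<in> distr Q" "\<And>q'. q' \<in> Q \<Longrightarrow> f q' \<le> g q'"
  shows "(\<Sum>q'\<in>Q. \<gamma> q' * f q') \<le> (\<Sum>q'\<in>Q. \<gamma> q' * g q')"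
  by (rule sum_mono, rule mult_left_mono) (use assms distr_nonneg in auto)

lemma eps_le:
  fixes x y :: real
  assumes "\<And>e. e > 0 \<Longrightarrow> x \<le> y + e"
  shows "x \<le> y"
  by (rule field_le_epsilon) (rule assms)

locale rmdp =
  fixes Q :: "'q set" and A :: "'a set" and \<Gamma> :: "'q \<Rightarrow> 'a \<Rightarrow> ('q \<Rightarrow> real) set"
    and Qs T :: "'q set" and qu :: 'q
  assumes finQ: "finite Q" and quQ: "qu \<in> Q" and quQs: "qu \<notin> Qs"
    and Qs_sub: "Qs \<subseteq> Q" and T_sub: "T \<subseteq> Qs"
    and finA: "finite A" and A_ne: "A \<noteq> {}"
    and Gam_ne: "\<And>q a. q \<in> Q \<Longrightarrow> a \<in> A \<Longrightarrow> \<Gamma> q a \<noteq> {}"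
    and Gam_distr: "\<And>q a. q \<in> Q \<Longrightarrow> a \<in> A \<Longrightarrow> \<Gamma> q a \<subseteq> distr Q"
    and Gam_qu: "\<And>a \<gamma>. a \<in> A \<Longrightarrow> \<gamma> \<in> \<Gamma> qu a \<Longrightarrow> \<gamma> qu = 1"
    and Gam_qu_dirac: "\<And>a. a \<in> A \<Longrightarrow> dirac qu \<in> \<Gamma> qu a"
begin

abbreviation "Adv \<equiv> adversaries Q A \<Gamma>"

definition PR :: "('q list \<Rightarrow> 'q \<Rightarrow> real) \<Rightarrow> 'q \<Rightarrow> real" where
  "PR K q = (SUP k. rwK Q Qs T K q k)"

definition Vs :: "('q list \<Rightarrow> 'a) \<Rightarrow> 'q \<Rightarrow> real" where
  "Vs \<sigma> q = (INF \<xi>\<in>Adv. PR (Kof \<sigma> \<xi>) q)"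

definition p :: "'q \<Rightarrow> real" where
  "p q = (SUP \<sigma>\<in>strategies A. Vs \<sigma> q)"

definition Bel :: "'q \<Rightarrow> 'a \<Rightarrow> ('q \<Rightarrow> real) \<Rightarrow> real" where
  "Bel q a f = (INF \<gamma>\<in>\<Gamma> q a. \<Sum>q'\<in>Q. \<gamma> q' * f q')"

lemma P_reach_eq: "P_reach Q Qs T q \<sigma> \<xi> = PR (Kof \<sigma> \<xi>) q"
  unfolding P_reach_def PR_def reach_within_eq Kof_def by (rule refl)

lemma p_eq: "p_low Q A \<Gamma> Qs T q = p q"
  unfolding p_low_def p_def Vs_def P_reach_eq by (rule refl)

lemma T_Q: "T \<subseteq> Q" using T_sub Qs_sub by blast

lemma good_gen:
  assumes "\<And>q a. q \<in> Q \<Longrightarrow> a \<in> A \<Longrightarrow> G q a \<subseteq> distr Q"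
    and "\<xi> \<in> adversaries Q A G" and "\<And>w. w \<noteq> [] \<Longrightarrow> set w \<subseteq> Q \<Longrightarrow> \<sigma> w \<in> A"
  shows "good Q (Kof \<sigma> \<xi>)"
  unfolding good_def Kof_def
proof (intro allI impI)
  fix w :: "'q list" assume w: "w \<noteq> []" "set w \<subseteq> Q"
  then have "last w \<in> Q" using last_in_set by blast
  moreover have "\<xi> w (\<sigma> w) \<in> G (last w) (\<sigma> w)" using assms(2,3) w by (auto simp: adversaries_def)
  ultimately show "\<xi> w (\<sigma> w) \<in> distr Q" using assms(1) assms(3)[OF w] by blast
qed

lemma good_Kof:
  assumes "\<sigma> \<in> strategies A" "\<xi> \<in> Adv"
  shows "good Q (Kof \<sigma> \<xi>)"
proof (rule good_gen[OF Gam_distr assms(2)])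
  fix w :: "'q list" show "\<sigma> w \<in> A" using assms(1) unfolding strategies_def by blast
qed

lemma adv_sh:
  assumes "\<xi> \<in> adversaries Q A G" "q \<in> Q"
  shows "(\<lambda>w. \<xi> (q # w)) \<in> adversaries Q A G"
  unfolding adversaries_def
proof (intro CollectI allI impI)
  fix w a assume w: "w \<noteq> [] \<and> set w \<subseteq> Q \<and> a \<in> A"
  then have "q # w \<noteq> [] \<and> set (q # w) \<subseteq> Q \<and> a \<in> A" using assms(2) by simp
  then have "\<xi> (q # w) a \<in> G (last (q # w)) a" using assms(1) unfolding adversaries_def by blast
  then show "\<xi> (q # w) a \<in> G (last w) a" using w by simp
qed

lemma strat_sh: "\<sigma> \<in> strategies A \<Longrightarrow> (\<lambda>w. \<sigma> (q # w)) \<in> strategies A"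
  by (auto simp: strategies_def)

definition xi0 :: "'q list \<Rightarrow> 'a \<Rightarrow> 'q \<Rightarrow> real" where
  "xi0 w a = (SOME \<gamma>. \<gamma> \<in> \<Gamma> (last w) a)"

lemma xi0_in:
  assumes "w \<noteq> []" "set w \<subseteq> Q" "a \<in> A"
  shows "xi0 w a \<in> \<Gamma> (last w) a"
proof -
  have "last w \<in> Q" using assms(1,2) last_in_set by blast
  then have "\<Gamma> (last w) a \<noteq> {}" using Gam_ne assms(3) by blast
  then have "\<exists>\<gamma>. \<gamma> \<in> \<Gamma> (last w) a" by blast
  then show ?thesis unfolding xi0_def by (rule someI_ex)
qed

lemma xi0_Adv: "xi0 \<in> Adv"
  unfolding adversaries_def using xi0_in by blast

lemma Adv_ne: "Adv \<noteq> {}" using xi0_Adv by blast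

definition a0 :: 'a where "a0 = (SOME a. a \<in> A)"
lemma a0_in: "a0 \<in> A" unfolding a0_def using A_ne by (simp add: some_in_eq)

lemma strat_ne: "(\<lambda>w. a0) \<in> strategies A" using a0_in by (simp add: strategies_def)
lemma strat_ne': "strategies A \<noteq> {}" using strat_ne by blast

lemma rwK_mono:
  assumes "good Q K" "q \<in> Q"
  shows "rwK Q Qs T K q k \<le> rwK Q Qs T K q (Suc k)"
  using assms
proof (induction k arbitrary: K q)
  case 0
  show ?case
  proof (cases "q \<in> T")
    case True then show ?thesis using rwK_T[OF finQ 0(1) 0(2) True] by simp
  next
    case False then show ?thesis using rwK_0[OF False, of Q Qs K] rwK_bounds(1)[OF finQ 0(1,2), of Qs T "Suc 0"] by simp
  qed
next
  case (Suc k)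
  show ?case
  proof (cases "q \<in> T")
    case True then show ?thesis using rwK_T[OF finQ Suc.prems True] by simp
  next
    case F: False
    show ?thesis
    proof (cases "q \<in> Qs")
      case False then show ?thesis using rwK_unsafe[OF T_sub False, of Q K] by simp
    next
      case True
      have "rwK Q Qs T K q (Suc k) = (\<Sum>q'\<in>Q. K [q] q' * rwK Q Qs T (shK q K) q' k)"
        by (rule rwK_Suc[OF finQ Suc.prems(2) True F])
      also have "\<dots> \<le> (\<Sum>q'\<in>Q. K [q] q' * rwK Q Qs T (shK q K) q' (Suc k))"
      proof (rule sum_mono)
        fix q' assume "q' \<in> Q"
        have "0 \<le> K [q] q'" using Suc.prems by (auto simp: good_def distr_def)
        then show "K [q] q' * rwK Q Qs T (shK q K) q' k \<le> K [q] q' * rwK Q Qs T (shK q K) q' (Suc k)"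
          using Suc.IH[OF good_sh[OF Suc.prems] \<open>q' \<in> Q\<close>] by (rule mult_left_mono[rotated])
      qed
      also have "\<dots> = rwK Q Qs T K q (Suc (Suc k))"
        by (rule rwK_Suc[OF finQ Suc.prems(2) True F, symmetric])
      finally show ?thesis .
    qed
  qed
qed

lemma PR_lim:
  assumes "good Q K" "q \<in> Q"
  shows "(\<lambda>k. rwK Q Qs T K q k) \<longlonglongrightarrow> PR K q"
  unfolding PR_def
proof (rule LIMSEQ_incseq_SUP)
  show "bdd_above (range (\<lambda>k. rwK Q Qs T K q k))"
  proof (rule bdd_aboveI[where M=1])
    fix x assume "x \<in> range (\<lambda>k. rwK Q Qs T K q k)"
    then obtain k where "x = rwK Q Qs T K q k" by blast
    then show "x \<le> 1" using rwK_bounds(2)[OF finQ assms, of Qs T k] by simp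
  qed
  show "incseq (\<lambda>k. rwK Q Qs T K q k)"
    by (rule incseq_SucI) (rule rwK_mono[OF assms])
qed

lemma PR_bounds:
  assumes "good Q K" "q \<in> Q"
  shows "0 \<le> PR K q" "PR K q \<le> 1"
proof -
  have l: "(\<lambda>k. rwK Q Qs T K q k) \<longlonglongrightarrow> PR K q" by (rule PR_lim[OF assms])
  show "0 \<le> PR K q"
    by (rule LIMSEQ_le_const[OF l]) (use rwK_bounds(1)[OF finQ assms, of Qs T] in blast)
  show "PR K q \<le> 1"
    by (rule LIMSEQ_le_const2[OF l]) (use rwK_bounds(2)[OF finQ assms, of Qs T] in blast)
qed

lemma PR_T:
  assumes "good Q K" "q \<in> T"
  shows "PR K q = 1"
proof -
  have qQ: "q \<in> Q" using assms(2) T_Q by blast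
  have "\<And>k. rwK Q Qs T K q k = 1" by (rule rwK_T[OF finQ assms(1) qQ assms(2)])
  then show ?thesis unfolding PR_def by simp
qed

lemma PR_unsafe:
  assumes "q \<notin> Qs"
  shows "PR K q = 0"
proof -
  have "\<And>k. rwK Q Qs T K q k = 0" by (rule rwK_unsafe[OF T_sub assms])
  then show ?thesis unfolding PR_def by simp
qed

lemma PR_step:
  assumes "good Q K" "q \<in> Qs" "q \<notin> T"
  shows "PR K q = (\<Sum>q'\<in>Q. K [q] q' * PR (shK q K) q')"
proof -
  have qQ: "q \<in> Q" using assms Qs_sub by blast
  have l1: "(\<lambda>k. rwK Q Qs T K q (Suc k)) \<longlonglongrightarrow> PR K q"
    using PR_lim[OF assms(1) qQ] by (rule LIMSEQ_Suc)
  have eq: "(\<lambda>k. rwK Q Qs T K q (Suc k)) = (\<lambda>k. \<Sum>q'\<in>Q. K [q] q' * rwK Q Qs T (shK q K) q' k)"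
    using rwK_Suc[OF finQ qQ assms(2,3)] by simp
  have l2: "(\<lambda>k. \<Sum>q'\<in>Q. K [q] q' * rwK Q Qs T (shK q K) q' k) \<longlonglongrightarrow> (\<Sum>q'\<in>Q. K [q] q' * PR (shK q K) q')"
  proof (rule tendsto_sum)
    fix q' assume "q' \<in> Q"
    show "(\<lambda>k. K [q] q' * rwK Q Qs T (shK q K) q' k) \<longlonglongrightarrow> K [q] q' * PR (shK q K) q'"
      by (rule tendsto_mult_left, rule PR_lim[OF good_sh[OF assms(1) qQ] \<open>q' \<in> Q\<close>])
  qed
  from l1 have "(\<lambda>k. \<Sum>q'\<in>Q. K [q] q' * rwK Q Qs T (shK q K) q' k) \<longlonglongrightarrow> PR K q" unfolding eq .
  then show ?thesis using l2 by (rule LIMSEQ_unique)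
qed

lemma PR_cong:
  assumes "\<And>u. u \<noteq> [] \<Longrightarrow> set u \<subseteq> Q \<Longrightarrow> hd u = q \<Longrightarrow> K u = K' u"
  shows "PR K q = PR K' q"
  unfolding PR_def using rwK_cong[OF assms] by simp

lemma Vs_bdd:
  assumes "\<sigma> \<in> strategies A" "q \<in> Q"
  shows "bdd_below ((\<lambda>\<xi>. PR (Kof \<sigma> \<xi>) q) ` Adv)"
proof (rule bdd_belowI[where m=0])
  fix x assume "x \<in> (\<lambda>\<xi>. PR (Kof \<sigma> \<xi>) q) ` Adv"
  then obtain \<xi> where "\<xi> \<in> Adv" "x = PR (Kof \<sigma> \<xi>) q" by blast
  then show "0 \<le> x" using PR_bounds(1)[OF good_Kof[OF assms(1)] assms(2)] by simp
qed

lemma Vs_lower: "\<sigma> \<in> strategies A \<Longrightarrow> q \<in> Q \<Longrightarrow> \<xi> \<in> Adv \<Longrightarrow> Vs \<sigma> q \<le> PR (Kof \<sigma> \<xi>) q"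
  unfolding Vs_def by (rule cINF_lower[OF Vs_bdd])

lemma Vs_bounds:
  assumes "\<sigma> \<in> strategies A" "q \<in> Q"
  shows "0 \<le> Vs \<sigma> q" "Vs \<sigma> q \<le> 1"
proof -
  show "0 \<le> Vs \<sigma> q" unfolding Vs_def
    by (rule cINF_greatest[OF Adv_ne]) (rule PR_bounds(1)[OF good_Kof[OF assms(1)] assms(2)])
  show "Vs \<sigma> q \<le> 1"
    using Vs_lower[OF assms xi0_Adv] PR_bounds(2)[OF good_Kof[OF assms(1) xi0_Adv] assms(2)] by simp
qed

lemma p_bdd:
  assumes "q \<in> Q"
  shows "bdd_above ((\<lambda>\<sigma>. Vs \<sigma> q) ` strategies A)"
proof (rule bdd_aboveI[where M=1])
  fix x assume "x \<in> (\<lambda>\<sigma>. Vs \<sigma> q) ` strategies A"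
  then obtain \<sigma> where "\<sigma> \<in> strategies A" "x = Vs \<sigma> q" by blast
  then show "x \<le> 1" using Vs_bounds(2)[OF _ assms] by simp
qed

lemma p_upper: "\<sigma> \<in> strategies A \<Longrightarrow> q \<in> Q \<Longrightarrow> Vs \<sigma> q \<le> p q"
  unfolding p_def by (rule cSUP_upper[OF _ p_bdd[of q]])

lemma p_bounds:
  assumes "q \<in> Q"
  shows "0 \<le> p q" "p q \<le> 1"
proof -
  show "0 \<le> p q" using p_upper[OF strat_ne assms] Vs_bounds(1)[OF strat_ne assms] by simp
  show "p q \<le> 1" unfolding p_def
    by (rule cSUP_least[OF strat_ne']) (rule Vs_bounds(2)[OF _ assms])
qed

lemma p_T: "q \<in> T \<Longrightarrow> p q = 1"
proof -
  assume q: "q \<in> T"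
  then have qQ: "q \<in> Q" using T_Q by blast
  have "Vs \<sigma> q = 1" if "\<sigma> \<in> strategies A" for \<sigma>
    unfolding Vs_def using PR_T[OF good_Kof[OF that] q] Adv_ne by simp
  then have "(\<lambda>\<sigma>. Vs \<sigma> q) ` strategies A = {1}" using strat_ne' by auto
  then show ?thesis unfolding p_def by simp
qed

lemma p_unsafe: "q \<notin> Qs \<Longrightarrow> p q = 0"
proof -
  assume q: "q \<notin> Qs"
  have "Vs \<sigma> q = 0" for \<sigma>
    unfolding Vs_def using PR_unsafe[OF q] Adv_ne by simp
  then have "(\<lambda>\<sigma>. Vs \<sigma> q) ` strategies A = {0}" using strat_ne' by auto
  then show ?thesis unfolding p_def by simp
qed

lemma Bel_bdd:
  assumes "q \<in> Q" "a \<in> A"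
  shows "bdd_below ((\<lambda>\<gamma>. \<Sum>q'\<in>Q. \<gamma> q' * f q') ` \<Gamma> q a)"
proof (rule bdd_belowI)
  fix x assume "x \<in> (\<lambda>\<gamma>. \<Sum>q'\<in>Q. \<gamma> q' * f q') ` \<Gamma> q a"
  then obtain \<gamma> where g: "\<gamma> \<in> \<Gamma> q a" "x = (\<Sum>q'\<in>Q. \<gamma> q' * f q')" by blast
  then have "\<gamma> \<in> distr Q" using Gam_distr assms by blast
  then show "- (\<Sum>q'\<in>Q. \<bar>f q'\<bar>) \<le> x" using sum_distr_abs[OF finQ, of \<gamma> f] g by linarith
qed

lemma Bel_lower: "q \<in> Q \<Longrightarrow> a \<in> A \<Longrightarrow> \<gamma> \<in> \<Gamma> q a \<Longrightarrow> Bel q a f \<le> (\<Sum>q'\<in>Q. \<gamma> q' * f q')"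
  unfolding Bel_def by (rule cINF_lower[OF Bel_bdd])

lemma Bel_less: "q \<in> Q \<Longrightarrow> a \<in> A \<Longrightarrow> Bel q a f < c \<Longrightarrow> \<exists>\<gamma>\<in>\<Gamma> q a. (\<Sum>q'\<in>Q. \<gamma> q' * f q') < c"
  unfolding Bel_def using cINF_less_iff[OF Gam_ne Bel_bdd] by blast

lemma Bel_greatest: "q \<in> Q \<Longrightarrow> a \<in> A \<Longrightarrow> (\<And>\<gamma>. \<gamma> \<in> \<Gamma> q a \<Longrightarrow> c \<le> (\<Sum>q'\<in>Q. \<gamma> q' * f q')) \<Longrightarrow> c \<le> Bel q a f"
  unfolding Bel_def by (rule cINF_greatest[OF Gam_ne])

lemma Bel_mono:
  assumes "q \<in> Q" "a \<in> A" "\<And>q'. q' \<in> Q \<Longrightarrow> f q' \<le> g q'"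
  shows "Bel q a f \<le> Bel q a g"
proof (rule Bel_greatest[OF assms(1,2)])
  fix \<gamma> assume g: "\<gamma> \<in> \<Gamma> q a"
  then have "Bel q a f \<le> (\<Sum>q'\<in>Q. \<gamma> q' * f q')" by (rule Bel_lower[OF assms(1,2)])
  also have "\<dots> \<le> (\<Sum>q'\<in>Q. \<gamma> q' * g q')"
    by (rule sum_distr_mono[OF _ assms(3)]) (use Gam_distr assms g in blast)
  finally show "Bel q a f \<le> (\<Sum>q'\<in>Q. \<gamma> q' * g q')" .
qed

end

lemma eps_le2:
  fixes x y :: real
  assumes "\<And>e. e > 0 \<Longrightarrow> x \<le> y + 2 * e"
  shows "x \<le> y"
proof (rule eps_le)
  fix e :: real assume "e > 0"
  then have "x \<le> y + 2 * (e / 2)" using assms[of "e/2"] by simp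
  then show "x \<le> y + e" by simp
qed

context rmdp begin

lemma Vs_less:
  assumes "\<sigma> \<in> strategies A" "q \<in> Q" "e > 0"
  shows "\<exists>\<xi>\<in>Adv. PR (Kof \<sigma> \<xi>) q < Vs \<sigma> q + e"
proof -
  have "(INF \<xi>\<in>Adv. PR (Kof \<sigma> \<xi>) q) < Vs \<sigma> q + e" using assms(3) by (simp add: Vs_def)
  then show ?thesis using cINF_less_iff[OF Adv_ne Vs_bdd[OF assms(1,2)]] by blast
qed

lemma p_less:
  assumes "q \<in> Q" "e > 0"
  shows "\<exists>\<sigma>\<in>strategies A. p q - e < Vs \<sigma> q"
proof -
  have "p q - e < (SUP \<sigma>\<in>strategies A. Vs \<sigma> q)" using assms(2) by (simp add: p_def)
  then show ?thesis using less_cSUP_iff[OF strat_ne' p_bdd[OF assms(1)]] by blast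
qed

lemma Vs_le_Bel:
  assumes \<sigma>: "\<sigma> \<in> strategies A" and q: "q \<in> Qs" "q \<notin> T"
  shows "Vs \<sigma> q \<le> Bel q (\<sigma> [q]) p"
proof (rule eps_le2)
  fix e :: real assume e: "e > 0"
  define a where "a = \<sigma> [q]"
  have aA: "a \<in> A" using \<sigma> by (simp add: strategies_def a_def)
  have qQ: "q \<in> Q" using q Qs_sub by blast
  define \<sigma>' where "\<sigma>' = (\<lambda>w. \<sigma> (q # w))"
  have \<sigma>': "\<sigma>' \<in> strategies A" using strat_sh[OF \<sigma>] by (simp add: \<sigma>'_def)
  have "Bel q a p < Bel q a p + e" using e by simp
  then obtain \<gamma> where \<gamma>: "\<gamma> \<in> \<Gamma> q a" "(\<Sum>q'\<in>Q. \<gamma> q' * p q') < Bel q a p + e"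
    using Bel_less[OF qQ aA] by blast
  have \<gamma>d: "\<gamma> \<in> distr Q" using Gam_distr[OF qQ aA] \<gamma>(1) by blast
  have "\<forall>q'\<in>Q. \<exists>\<xi>. \<xi> \<in> Adv \<and> PR (Kof \<sigma>' \<xi>) q' < Vs \<sigma>' q' + e"
    using Vs_less[OF \<sigma>' _ e] by blast
  from bchoice[OF this] obtain \<xi>s where \<xi>s: "\<forall>q'\<in>Q. \<xi>s q' \<in> Adv \<and> PR (Kof \<sigma>' (\<xi>s q')) q' < Vs \<sigma>' q' + e"
    by blast
  define \<xi> where "\<xi> = (\<lambda>w b. if 2 \<le> length w then \<xi>s (w ! 1) (tl w) b
                        else if w = [q] \<and> b = a then \<gamma> else xi0 w b)"
  have \<xi>A: "\<xi> \<in> Adv"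
    unfolding adversaries_def
  proof (intro CollectI allI impI)
    fix w b assume wb: "w \<noteq> [] \<and> set w \<subseteq> Q \<and> b \<in> A"
    show "\<xi> w b \<in> \<Gamma> (last w) b"
    proof (cases "2 \<le> length w")
      case True
      have "w ! 1 \<in> set w" by (rule nth_mem) (use True in simp)
      then have w1: "w ! 1 \<in> Q" using wb by blast
      obtain x xs where wx: "w = x # xs" using wb by (cases w) auto
      have tl: "tl w \<noteq> []" "set (tl w) \<subseteq> Q" using True wb wx by auto
      have lt: "last (tl w) = last w" using tl(1) by (simp add: last_tl)
      have "\<xi>s (w ! 1) \<in> Adv" using \<xi>s w1 by blast
      then have "\<xi>s (w ! 1) (tl w) b \<in> \<Gamma> (last (tl w)) b" using tl wb unfolding adversaries_def by blast
      then show ?thesis using True lt by (simp add: \<xi>_def)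
    next
      case False
      show ?thesis
      proof (cases "w = [q] \<and> b = a")
        case True then show ?thesis using False \<gamma>(1) by (simp add: \<xi>_def)
      next
        case F2: False
        have "\<xi> w b = xi0 w b" unfolding \<xi>_def by (simp only: if_not_P[OF False] if_not_P[OF F2])
        then show ?thesis using xi0_in[of w b] wb by simp
      qed
    qed
  qed
  have K1: "Kof \<sigma> \<xi> [q] = \<gamma>" by (simp add: Kof_def \<xi>_def a_def)
  have PRsh: "PR (shK q (Kof \<sigma> \<xi>)) q' = PR (Kof \<sigma>' (\<xi>s q')) q'" for q'
  proof (rule PR_cong)
    fix u assume u: "u \<noteq> []" "set u \<subseteq> Q" "hd u = q'"
    then have "(q # u) ! 1 = q'" by (cases u) auto
    moreover have "2 \<le> length (q # u)" using u(1) by (cases u) auto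
    ultimately show "shK q (Kof \<sigma> \<xi>) u = Kof \<sigma>' (\<xi>s q') u"
      by (simp add: shK_def Kof_def \<xi>_def \<sigma>'_def)
  qed
  have good: "good Q (Kof \<sigma> \<xi>)" by (rule good_Kof[OF \<sigma> \<xi>A])
  have "Vs \<sigma> q \<le> PR (Kof \<sigma> \<xi>) q" by (rule Vs_lower[OF \<sigma> qQ \<xi>A])
  also have "PR (Kof \<sigma> \<xi>) q = (\<Sum>q'\<in>Q. \<gamma> q' * PR (Kof \<sigma>' (\<xi>s q')) q')"
    using PR_step[OF good q] K1 PRsh by simp
  also have "\<dots> \<le> (\<Sum>q'\<in>Q. \<gamma> q' * (p q' + e))"
  proof (rule sum_distr_mono[OF \<gamma>d])
    fix q' assume q': "q' \<in> Q"
    have "PR (Kof \<sigma>' (\<xi>s q')) q' < Vs \<sigma>' q' + e" using \<xi>s q' by blast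
    also have "Vs \<sigma>' q' \<le> p q'" by (rule p_upper[OF \<sigma>' q'])
    finally show "PR (Kof \<sigma>' (\<xi>s q')) q' \<le> p q' + e" by simp
  qed
  also have "\<dots> = (\<Sum>q'\<in>Q. \<gamma> q' * p q') + e" by (rule sum_distr_shift[OF \<gamma>d])
  also have "\<dots> \<le> Bel q a p + 2 * e" using \<gamma>(2) by simp
  finally show "Vs \<sigma> q \<le> Bel q (\<sigma> [q]) p + 2 * e" by (simp add: a_def)
qed

lemma Bel_le_p:
  assumes q: "q \<in> Qs" "q \<notin> T" and aA: "a \<in> A"
  shows "Bel q a p \<le> p q"
proof (rule eps_le)
  fix e :: real assume e: "e > 0"
  have qQ: "q \<in> Q" using q Qs_sub by blast
  have "\<forall>q'\<in>Q. \<exists>\<sigma>'. \<sigma>' \<in> strategies A \<and> p q' - e < Vs \<sigma>' q'"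
    using p_less[OF _ e] by blast
  from bchoice[OF this] obtain \<sigma>s' where \<sigma>s': "\<forall>q'\<in>Q. \<sigma>s' q' \<in> strategies A \<and> p q' - e < Vs (\<sigma>s' q') q'"
    by blast
  define \<sigma> where "\<sigma> = (\<lambda>w. if 2 \<le> length w \<and> w ! 1 \<in> Q then \<sigma>s' (w ! 1) (tl w) else a)"
  have \<sigma>A: "\<sigma> \<in> strategies A"
    unfolding strategies_def
  proof (intro CollectI allI)
    fix w :: "'q list"
    show "\<sigma> w \<in> A"
    proof (cases "2 \<le> length w \<and> w ! 1 \<in> Q")
      case True
      then have "\<sigma>s' (w ! 1) \<in> strategies A" using \<sigma>s' by blast
      moreover have "\<sigma> w = \<sigma>s' (w ! 1) (tl w)" unfolding \<sigma>_def by (rule if_P[OF True])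
      ultimately show ?thesis by (simp add: strategies_def)
    next
      case False
      have "\<sigma> w = a" unfolding \<sigma>_def by (rule if_not_P[OF False])
      then show ?thesis using aA by simp
    qed
  qed
  have "Bel q a p - e \<le> Vs \<sigma> q"
    unfolding Vs_def
  proof (rule cINF_greatest[OF Adv_ne])
    fix \<xi> assume \<xi>: "\<xi> \<in> Adv"
    define \<gamma> where "\<gamma> = \<xi> [q] a"
    have "[q] \<noteq> [] \<and> set [q] \<subseteq> Q \<and> a \<in> A" using qQ aA by simp
    then have "\<xi> [q] a \<in> \<Gamma> (last [q]) a" using \<xi> unfolding adversaries_def by blast
    then have \<gamma>: "\<gamma> \<in> \<Gamma> q a" unfolding \<gamma>_def by simp
    have \<gamma>d: "\<gamma> \<in> distr Q" using Gam_distr[OF qQ aA] \<gamma> by blast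
    have K1: "Kof \<sigma> \<xi> [q] = \<gamma>" by (simp add: Kof_def \<sigma>_def \<gamma>_def)
    have \<xi>': "(\<lambda>w. \<xi> (q # w)) \<in> Adv" by (rule adv_sh[OF \<xi> qQ])
    have PRsh: "PR (shK q (Kof \<sigma> \<xi>)) q' = PR (Kof (\<sigma>s' q') (\<lambda>w. \<xi> (q # w))) q'" if q': "q' \<in> Q" for q'
    proof (rule PR_cong)
      fix u assume u: "u \<noteq> []" "set u \<subseteq> Q" "hd u = q'"
      then have "(q # u) ! 1 = q'" by (cases u) auto
      moreover have "2 \<le> length (q # u)" using u(1) by (cases u) auto
      ultimately show "shK q (Kof \<sigma> \<xi>) u = Kof (\<sigma>s' q') (\<lambda>w. \<xi> (q # w)) u"
        using q' by (simp add: shK_def Kof_def \<sigma>_def)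
    qed
    have good: "good Q (Kof \<sigma> \<xi>)" by (rule good_Kof[OF \<sigma>A \<xi>])
    have "Bel q a p - e \<le> (\<Sum>q'\<in>Q. \<gamma> q' * p q') + (- e)" using Bel_lower[OF qQ aA \<gamma>] by simp
    also have "\<dots> = (\<Sum>q'\<in>Q. \<gamma> q' * (p q' + (- e)))" by (rule sum_distr_shift[OF \<gamma>d, symmetric])
    also have "\<dots> \<le> (\<Sum>q'\<in>Q. \<gamma> q' * PR (Kof (\<sigma>s' q') (\<lambda>w. \<xi> (q # w))) q')"
    proof (rule sum_distr_mono[OF \<gamma>d])
      fix q' assume q': "q' \<in> Q"
      have s: "\<sigma>s' q' \<in> strategies A" using \<sigma>s' q' by blast
      have "p q' - e < Vs (\<sigma>s' q') q'" using \<sigma>s' q' by blast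
      also have "\<dots> \<le> PR (Kof (\<sigma>s' q') (\<lambda>w. \<xi> (q # w))) q'" by (rule Vs_lower[OF s q' \<xi>'])
      finally show "p q' + - e \<le> PR (Kof (\<sigma>s' q') (\<lambda>w. \<xi> (q # w))) q'" by simp
    qed
    also have "\<dots> = PR (Kof \<sigma> \<xi>) q"
      using PR_step[OF good q] K1 PRsh by simp
    finally show "Bel q a p - e \<le> PR (Kof \<sigma> \<xi>) q" .
  qed
  also have "Vs \<sigma> q \<le> p q" by (rule p_upper[OF \<sigma>A qQ])
  finally show "Bel q a p \<le> p q + e" by simp
qed

lemma rwK_super:
  assumes uT: "\<And>q. q \<in> T \<Longrightarrow> 1 \<le> u q" and u0: "\<And>q. q \<in> Q \<Longrightarrow> 0 \<le> u q"
  shows "good Q K \<Longrightarrow> q \<in> Q \<Longrightarrow> c > 0 \<Longrightarrow>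
    (\<forall>w. w \<noteq> [] \<longrightarrow> set w \<subseteq> Q \<longrightarrow> last w \<in> Qs \<longrightarrow> last w \<notin> T \<longrightarrow>
        (\<Sum>q'\<in>Q. K w q' * u q') \<le> u (last w) + c * (1/2) ^ length w) \<Longrightarrow>
    rwK Q Qs T K q k \<le> u q + c"
proof (induction k arbitrary: K q c)
  case 0
  show ?case
  proof (cases "q \<in> T")
    case True then show ?thesis using rwK_T[OF finQ 0(1,2) True, of Qs 0] uT[OF True] 0(3) by simp
  next
    case False then show ?thesis using rwK_0[OF False, of Q Qs K] u0[OF 0(2)] 0(3) by simp
  qed
next
  case (Suc k)
  show ?case
  proof (cases "q \<in> T")
    case True then show ?thesis using rwK_T[OF finQ Suc.prems(1,2) True, of Qs "Suc k"] uT[OF True] Suc.prems(3) by simp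
  next
    case F: False
    show ?thesis
    proof (cases "q \<in> Qs")
      case False then show ?thesis using rwK_unsafe[OF T_sub False, of Q K "Suc k"] u0[OF Suc.prems(2)] Suc.prems(3) by simp
    next
      case True
      have gd: "K [q] \<in> distr Q" using Suc.prems(1,2) by (simp add: good_def)
      have hyp1: "(\<Sum>q'\<in>Q. K [q] q' * u q') \<le> u q + c * (1/2)"
      proof -
        have "[q] \<noteq> []" "set [q] \<subseteq> Q" "last [q] \<in> Qs" "last [q] \<notin> T" using Suc.prems(2) True F by auto
        then have "(\<Sum>q'\<in>Q. K [q] q' * u q') \<le> u (last [q]) + c * (1/2) ^ length [q]"
          using Suc.prems(4) by blast
        then show ?thesis by simp
      qed
      have IH: "rwK Q Qs T (shK q K) q' k \<le> u q' + c / 2" if q': "q' \<in> Q" for q'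
      proof (rule Suc.IH[OF good_sh[OF Suc.prems(1,2)] q'])
        show "0 < c / 2" using Suc.prems(3) by simp
        show "\<forall>w. w \<noteq> [] \<longrightarrow> set w \<subseteq> Q \<longrightarrow> last w \<in> Qs \<longrightarrow> last w \<notin> T \<longrightarrow>
          (\<Sum>q'\<in>Q. shK q K w q' * u q') \<le> u (last w) + c / 2 * (1 / 2) ^ length w"
        proof (intro allI impI)
          fix w :: "'q list" assume w: "w \<noteq> []" "set w \<subseteq> Q" "last w \<in> Qs" "last w \<notin> T"
          have "q # w \<noteq> []" "set (q # w) \<subseteq> Q" "last (q # w) \<in> Qs" "last (q # w) \<notin> T"
            using w Suc.prems(2) by auto
          then have "(\<Sum>q'\<in>Q. K (q # w) q' * u q') \<le> u (last (q # w)) + c * (1/2) ^ length (q # w)"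
            using Suc.prems(4) by blast
          then show "(\<Sum>q'\<in>Q. shK q K w q' * u q') \<le> u (last w) + c / 2 * (1 / 2) ^ length w"
            using w(1) by (simp add: shK_def)
        qed
      qed
      have "rwK Q Qs T K q (Suc k) = (\<Sum>q'\<in>Q. K [q] q' * rwK Q Qs T (shK q K) q' k)"
        by (rule rwK_Suc[OF finQ Suc.prems(2) True F])
      also have "\<dots> \<le> (\<Sum>q'\<in>Q. K [q] q' * (u q' + c / 2))"
        by (rule sum_distr_mono[OF gd IH])
      also have "\<dots> = (\<Sum>q'\<in>Q. K [q] q' * u q') + c / 2" by (rule sum_distr_shift[OF gd])
      also have "\<dots> \<le> u q + c" using hyp1 by simp
      finally show ?thesis .
    qed
  qed
qed

lemma p_le_super:
  assumes uT: "\<And>q. q \<in> T \<Longrightarrow> 1 \<le> u q" and u0: "\<And>q. q \<in> Q \<Longrightarrow> 0 \<le> u q"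
    and uB: "\<And>q a. q \<in> Qs \<Longrightarrow> q \<notin> T \<Longrightarrow> a \<in> A \<Longrightarrow> Bel q a u \<le> u q"
    and qQ: "q \<in> Q"
  shows "p q \<le> u q"
proof (rule eps_le)
  fix c :: real assume c: "c > 0"
  define P where "P = (\<lambda>w b \<gamma>. \<gamma> \<in> \<Gamma> (last w) b \<and> (\<Sum>q'\<in>Q. \<gamma> q' * u q') < u (last w) + c * (1/2) ^ length w)"
  define \<xi> where "\<xi> = (\<lambda>w b. if w \<noteq> [] \<and> set w \<subseteq> Q \<and> last w \<in> Qs \<and> last w \<notin> T \<and> b \<in> A then (SOME \<gamma>. P w b \<gamma>) else xi0 w b)"
  have exP: "P w b (SOME \<gamma>. P w b \<gamma>)" if w: "w \<noteq> []" "set w \<subseteq> Q" "last w \<in> Qs" "last w \<notin> T" "b \<in> A" for w b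
  proof (rule someI_ex[where P="P w b"])
    have lQ: "last w \<in> Q" using w(1,2) last_in_set by blast
    have "Bel (last w) b u < u (last w) + c * (1/2) ^ length w"
    proof -
      have "0 < c * (1/2) ^ length w" using c by simp
      then show ?thesis using uB[OF w(3,4,5)] by linarith
    qed
    then show "\<exists>\<gamma>. P w b \<gamma>" using Bel_less[OF lQ w(5)] unfolding P_def by blast
  qed
  have \<xi>A: "\<xi> \<in> Adv"
    unfolding adversaries_def
  proof (intro CollectI allI impI)
    fix w b assume wb: "w \<noteq> [] \<and> set w \<subseteq> Q \<and> b \<in> A"
    show "\<xi> w b \<in> \<Gamma> (last w) b"
    proof (cases "last w \<in> Qs \<and> last w \<notin> T")
      case True
      then have "P w b (SOME \<gamma>. P w b \<gamma>)" using exP wb by blast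
      then show ?thesis using True wb unfolding \<xi>_def P_def by simp
    next
      case False then show ?thesis using wb xi0_in[of w b] unfolding \<xi>_def by auto
    qed
  qed
  have "Vs \<sigma> q \<le> u q + c" if \<sigma>: "\<sigma> \<in> strategies A" for \<sigma>
  proof -
    have hyp: "\<forall>w. w \<noteq> [] \<longrightarrow> set w \<subseteq> Q \<longrightarrow> last w \<in> Qs \<longrightarrow> last w \<notin> T \<longrightarrow>
        (\<Sum>q'\<in>Q. Kof \<sigma> \<xi> w q' * u q') \<le> u (last w) + c * (1/2) ^ length w"
    proof (intro allI impI)
      fix w :: "'q list" assume w: "w \<noteq> []" "set w \<subseteq> Q" "last w \<in> Qs" "last w \<notin> T"
      have sA: "\<sigma> w \<in> A" using \<sigma> by (simp add: strategies_def)
      have "P w (\<sigma> w) (SOME \<gamma>. P w (\<sigma> w) \<gamma>)" by (rule exP[OF w sA])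
      then have "P w (\<sigma> w) (\<xi> w (\<sigma> w))" using w sA unfolding \<xi>_def by simp
      then show "(\<Sum>q'\<in>Q. Kof \<sigma> \<xi> w q' * u q') \<le> u (last w) + c * (1/2) ^ length w"
        unfolding P_def Kof_def by simp
    qed
    have "PR (Kof \<sigma> \<xi>) q \<le> u q + c"
      unfolding PR_def
      by (rule cSUP_least) (simp, rule rwK_super[OF uT u0 good_Kof[OF \<sigma> \<xi>A] qQ c hyp])
    then show ?thesis using Vs_lower[OF \<sigma> qQ \<xi>A] by simp
  qed
  then show "p q \<le> u q + c" unfolding p_def by (rule cSUP_least[OF strat_ne'])
qed

end

context rmdp begin

definition Ast :: "'q \<Rightarrow> 'a set" where "Ast = opt_actions Q A \<Gamma> p"
definition Qm :: "nat \<Rightarrow> 'q set" where "Qm = Qlev Q \<Gamma> Ast T"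
definition mass :: "'q set \<Rightarrow> 'q \<Rightarrow> 'a \<Rightarrow> real" where
  "mass S q a = (INF \<gamma>\<in>\<Gamma> q a. \<Sum>q'\<in>S. \<gamma> q')"
definition mmax :: nat where "mmax = (LEAST k. k \<ge> 1 \<and> Qm k = Qm (k - 1))"
definition L :: nat where "L = mmax - 1"

lemma Ast_iff: "a \<in> Ast q \<longleftrightarrow> a \<in> A \<and> (\<forall>b\<in>A. Bel q b p \<le> Bel q a p)"
  by (simp add: Ast_def opt_actions_def Bel_def)

lemma Ast_sub: "a \<in> Ast q \<Longrightarrow> a \<in> A" using Ast_iff by blast

lemma Ast_ne: "\<exists>a. a \<in> Ast q"
proof -
  have fin: "finite ((\<lambda>b. Bel q b p) ` A)" using finA by simp
  have ne: "(\<lambda>b. Bel q b p) ` A \<noteq> {}" using A_ne by simp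
  have "Max ((\<lambda>b. Bel q b p) ` A) \<in> (\<lambda>b. Bel q b p) ` A" by (rule Max_in[OF fin ne])
  then obtain a where a: "a \<in> A" "Bel q a p = Max ((\<lambda>b. Bel q b p) ` A)" by auto
  have "\<forall>b\<in>A. Bel q b p \<le> Bel q a p"
  proof
    fix b assume "b \<in> A"
    then show "Bel q b p \<le> Bel q a p" unfolding a(2) by (intro Max_ge[OF fin]) simp
  qed
  then show ?thesis using a(1) Ast_iff by blast
qed

lemma Qm_0: "Qm 0 = T" by (simp add: Qm_def)

lemma Qm_Suc: "Qm (Suc k) = Qm k \<union> {q \<in> Q - Qm k. \<exists>a\<in>Ast q. mass (Qm k) q a > 0}"
  by (simp add: Qm_def mass_def)

lemma Qm_sub: "Qm k \<subseteq> Q"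
proof (induction k)
  case 0 then show ?case using T_Q by (simp add: Qm_0)
next
  case (Suc k) then show ?case unfolding Qm_Suc by blast
qed

lemma Qm_mono1: "Qm k \<subseteq> Qm (Suc k)" unfolding Qm_Suc by blast

lemma Qm_mono: "k \<le> k' \<Longrightarrow> Qm k \<subseteq> Qm k'"
  by (rule lift_Suc_mono_le[of Qm, OF Qm_mono1])

lemma T_Qm: "T \<subseteq> Qm k" using Qm_mono[of 0 k] by (simp add: Qm_0)

lemma Qm_exists: "\<exists>k. k \<ge> 1 \<and> Qm k = Qm (k - 1)"
proof (rule ccontr)
  assume "\<not> ?thesis"
  then have ne: "\<And>k. Qm (Suc k) \<noteq> Qm k" by (metis One_nat_def Suc_le_mono diff_Suc_1 le0)
  have "k \<le> card (Qm k)" for k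
  proof (induction k)
    case 0 then show ?case by simp
  next
    case (Suc k)
    have "Qm k \<subset> Qm (Suc k)" using Qm_mono1[of k] ne[of k] by blast
    moreover have "finite (Qm (Suc k))" using Qm_sub finQ finite_subset by blast
    ultimately have "card (Qm k) < card (Qm (Suc k))" by (intro psubset_card_mono)
    then show ?case using Suc.IH by simp
  qed
  moreover have "card (Qm (Suc (card Q))) \<le> card Q" by (rule card_mono[OF finQ Qm_sub])
  ultimately show False using Suc_n_not_le_n le_trans by blast
qed

lemma mmax: "1 \<le> mmax" "Qm mmax = Qm (mmax - 1)"
proof -
  have "1 \<le> mmax \<and> Qm mmax = Qm (mmax - 1)"
    unfolding mmax_def using Qm_exists by (rule LeastI_ex)
  then show "1 \<le> mmax" "Qm mmax = Qm (mmax - 1)" by blast+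
qed

lemma mmax_L: "mmax = Suc L" using mmax(1) by (simp add: L_def)

lemma Qm_L_stable: "Qm (Suc L) = Qm L"
  using mmax(2) mmax_L by simp

lemma Qm_stable_all: "L \<le> k \<Longrightarrow> Qm k = Qm L"
proof (induction k rule: dec_induct)
  case base then show ?case by simp
next
  case (step k)
  have "Qm (Suc k) = Qm k \<union> {q \<in> Q - Qm k. \<exists>a\<in>Ast q. mass (Qm k) q a > 0}" by (rule Qm_Suc)
  also have "\<dots> = Qm L \<union> {q \<in> Q - Qm L. \<exists>a\<in>Ast q. mass (Qm L) q a > 0}" using step.IH by simp
  also have "\<dots> = Qm (Suc L)" by (rule Qm_Suc[symmetric])
  finally show ?case using Qm_L_stable by simp
qed

lemma mass_bdd:
  assumes "q \<in> Q" "a \<in> A"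
  shows "bdd_below ((\<lambda>\<gamma>. \<Sum>q'\<in>S. \<gamma> q') ` \<Gamma> q a)"
proof (rule bdd_belowI[where m=0])
  fix x assume "x \<in> (\<lambda>\<gamma>. \<Sum>q'\<in>S. \<gamma> q') ` \<Gamma> q a"
  then obtain \<gamma> where g: "\<gamma> \<in> \<Gamma> q a" "x = (\<Sum>q'\<in>S. \<gamma> q')" by blast
  then have "\<gamma> \<in> distr Q" using Gam_distr[OF assms] by blast
  then show "0 \<le> x" unfolding g(2) by (intro sum_nonneg) (rule distr_nonneg)
qed

lemma mass_lower: "q \<in> Q \<Longrightarrow> a \<in> A \<Longrightarrow> \<gamma> \<in> \<Gamma> q a \<Longrightarrow> mass S q a \<le> (\<Sum>q'\<in>S. \<gamma> q')"
  unfolding mass_def by (rule cINF_lower[OF mass_bdd])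

lemma mass_less: "q \<in> Q \<Longrightarrow> a \<in> A \<Longrightarrow> mass S q a < c \<Longrightarrow> \<exists>\<gamma>\<in>\<Gamma> q a. (\<Sum>q'\<in>S. \<gamma> q') < c"
  unfolding mass_def using cINF_less_iff[OF Gam_ne mass_bdd] by blast

lemma qu_notin_Qm: "qu \<notin> Qm k"
proof (induction k)
  case 0 then show ?case using T_sub quQs by (auto simp: Qm_0)
next
  case (Suc k)
  have "\<not> mass (Qm k) qu a > 0" if a: "a \<in> Ast qu" for a
  proof -
    have aA: "a \<in> A" by (rule Ast_sub[OF a])
    have "mass (Qm k) qu a \<le> (\<Sum>q'\<in>Qm k. dirac qu q')" by (rule mass_lower[OF quQ aA Gam_qu_dirac[OF aA]])
    also have "(\<Sum>q'\<in>Qm k. dirac qu q') = 0" using Suc.IH by (intro sum.neutral) (auto simp: dirac_def)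
    finally show ?thesis by simp
  qed
  then show ?case using Suc.IH unfolding Qm_Suc by blast
qed

lemma level:
  assumes "q \<in> Qm k" "q \<notin> T"
  shows "\<exists>j. 1 \<le> j \<and> j \<le> k \<and> q \<in> Qm j \<and> q \<notin> Qm (j - 1)"
  using assms
proof (induction k)
  case 0 then show ?case by (simp add: Qm_0)
next
  case (Suc k)
  show ?case
  proof (cases "q \<in> Qm k")
    case True
    then obtain j where "1 \<le> j \<and> j \<le> k \<and> q \<in> Qm j \<and> q \<notin> Qm (j - 1)" using Suc.IH Suc.prems(2) by blast
    then show ?thesis by (intro exI[of _ j]) simp
  next
    case False
    then show ?thesis using Suc.prems(1) by (intro exI[of _ "Suc k"]) simp
  qed
qed

lemma stuck:
  assumes "q \<in> Q" "q \<notin> Qm L" "a \<in> Ast q"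
  shows "mass (Qm L) q a \<le> 0"
proof (rule ccontr)
  assume "\<not> mass (Qm L) q a \<le> 0"
  then have "0 < mass (Qm L) q a" by linarith
  then have "\<exists>a\<in>Ast q. 0 < mass (Qm L) q a" using assms(3) by blast
  then have "q \<in> Qm (Suc L)" using assms(1,2) unfolding Qm_Suc by blast
  then show False using assms(2) Qm_L_stable by simp
qed

lemma Bel_stuck:
  assumes q: "q \<in> Q" "q \<notin> Qm L" and a: "a \<in> Ast q"
    and f1: "\<And>q'. q' \<in> Qm L \<Longrightarrow> f q' \<le> 1"
    and fc: "\<And>q'. q' \<in> Q \<Longrightarrow> q' \<notin> Qm L \<Longrightarrow> f q' \<le> c" and c0: "0 \<le> c"
  shows "Bel q a f \<le> c"
proof (rule eps_le)
  fix e :: real assume e: "e > 0"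
  have aA: "a \<in> A" by (rule Ast_sub[OF a])
  have "mass (Qm L) q a < e" using stuck[OF q a] e by linarith
  then obtain \<gamma> where \<gamma>: "\<gamma> \<in> \<Gamma> q a" "(\<Sum>q'\<in>Qm L. \<gamma> q') < e" using mass_less[OF q(1) aA] by blast
  have \<gamma>d: "\<gamma> \<in> distr Q" using Gam_distr[OF q(1) aA] \<gamma>(1) by blast
  have nn: "\<And>x. 0 \<le> \<gamma> x" by (rule distr_nonneg[OF \<gamma>d])
  have split: "(\<Sum>q'\<in>Q. \<gamma> q' * f q') = (\<Sum>q'\<in>Q - Qm L. \<gamma> q' * f q') + (\<Sum>q'\<in>Qm L. \<gamma> q' * f q')"
    by (rule sum.subset_diff[OF Qm_sub finQ])
  have s1: "(\<Sum>q'\<in>Qm L. \<gamma> q' * f q') \<le> (\<Sum>q'\<in>Qm L. \<gamma> q')"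
  proof (rule sum_mono)
    fix x assume "x \<in> Qm L"
    then have "\<gamma> x * f x \<le> \<gamma> x * 1" by (intro mult_left_mono f1 nn)
    then show "\<gamma> x * f x \<le> \<gamma> x" by simp
  qed
  have s2: "(\<Sum>q'\<in>Q - Qm L. \<gamma> q' * f q') \<le> (\<Sum>q'\<in>Q - Qm L. \<gamma> q' * c)"
  proof (rule sum_mono)
    fix x assume "x \<in> Q - Qm L"
    then show "\<gamma> x * f x \<le> \<gamma> x * c" by (intro mult_left_mono fc nn) auto
  qed
  have s3: "(\<Sum>q'\<in>Q - Qm L. \<gamma> q' * c) = (\<Sum>q'\<in>Q - Qm L. \<gamma> q') * c" by (simp add: sum_distrib_right)
  have s4: "(\<Sum>q'\<in>Q - Qm L. \<gamma> q') \<le> (\<Sum>q'\<in>Q. \<gamma> q')"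
    by (rule sum_mono2[OF finQ]) (auto intro: nn)
  then have s5: "(\<Sum>q'\<in>Q - Qm L. \<gamma> q') \<le> 1" using distr_sum[OF \<gamma>d] by simp
  have s6: "(\<Sum>q'\<in>Q - Qm L. \<gamma> q') * c \<le> 1 * c" by (rule mult_right_mono[OF s5 c0])
  have "Bel q a f \<le> (\<Sum>q'\<in>Q. \<gamma> q' * f q')" by (rule Bel_lower[OF q(1) aA \<gamma>(1)])
  also have "\<dots> \<le> c + e" using split s1 s2 s3 s6 \<gamma>(2) by linarith
  finally show "Bel q a f \<le> c + e" .
qed

lemma trap:
  assumes q0Q: "q0 \<in> Q" and pos: "0 < p q0"
  shows "q0 \<in> Qm L"
proof (rule ccontr)
  assume nq: "q0 \<notin> Qm L"
  define R where "R = Q - Qm L"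
  have finR: "finite R" using finQ by (simp add: R_def)
  have q0R: "q0 \<in> R" using q0Q nq by (simp add: R_def)
  define M where "M = Max (p ` R)"
  have M_ge: "p q \<le> M" if "q \<in> R" for q unfolding M_def using finR that by simp
  have M_in: "M \<in> p ` R" unfolding M_def using finR q0R by (intro Max_in) auto
  have Mpos: "0 < M" using M_ge[OF q0R] pos by simp
  define S where "S = {q \<in> R. p q = M}"
  obtain q1 where q1: "q1 \<in> S" using M_in unfolding S_def by auto
  have SR: "S \<subseteq> R" by (auto simp: S_def)
  have S_props: "q \<in> Qs \<and> q \<notin> T \<and> q \<in> Q \<and> q \<notin> Qm L \<and> p q = M" if "q \<in> S" for q
  proof -
    have qR: "q \<in> R" "p q = M" using that by (auto simp: S_def)
    have "q \<in> Qs" using p_unsafe[of q] qR(2) Mpos by fastforce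
    moreover have "q \<notin> T" using qR T_Qm[of L] by (auto simp: R_def)
    ultimately show ?thesis using qR by (auto simp: R_def)
  qed
  have p1: "p q \<le> 1" if "q \<in> Q" for q by (rule p_bounds(2)[OF that])
  have F1: "Bel q a p \<le> M" if qS: "q \<in> S" and aA: "a \<in> Ast q" for q a
  proof (rule Bel_stuck)
    show "q \<in> Q" "q \<notin> Qm L" using S_props[OF qS] by auto
    show "a \<in> Ast q" by (rule aA)
    show "p q' \<le> 1" if "q' \<in> Qm L" for q' using p1 Qm_sub that by blast
    show "p q' \<le> M" if "q' \<in> Q" "q' \<notin> Qm L" for q' using M_ge that by (simp add: R_def)
    show "0 \<le> M" using Mpos by simp
  qed
  have F2: "Bel q b p \<le> M" if qS: "q \<in> S" and bA: "b \<in> A" for q b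
  proof -
    obtain a where a: "a \<in> Ast q" using Ast_ne by blast
    then have "Bel q b p \<le> Bel q a p" using bA Ast_iff by blast
    then show ?thesis using F1[OF qS a] by simp
  qed
  have F3: "Bel q b p < M" if qS: "q \<in> S" and bA: "b \<in> A" and nb: "b \<notin> Ast q" for q b
  proof -
    have "\<not> (\<forall>c\<in>A. Bel q c p \<le> Bel q b p)" using bA nb Ast_iff by blast
    then obtain c where c: "c \<in> A" "Bel q b p < Bel q c p" by (meson not_le)
    then show ?thesis using F2[OF qS c(1)] by simp
  qed
  define Pairs where "Pairs = {(q, b). q \<in> S \<and> b \<in> A \<and> b \<notin> Ast q}"
  have finPairs: "finite Pairs"
  proof (rule finite_subset)
    show "Pairs \<subseteq> S \<times> A" by (auto simp: Pairs_def)
    show "finite (S \<times> A)" using finR SR finA finite_subset by blast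
  qed
  define Dset where "Dset = insert M ((\<lambda>q'. M - p q') ` (R - S) \<union> (\<lambda>(q, b). M - Bel q b p) ` Pairs)"
  have finD: "finite Dset" using finR finPairs by (simp add: Dset_def)
  define \<delta> where "\<delta> = Min Dset"
  have allpos: "0 < x" if xD: "x \<in> Dset" for x
  proof -
    from xD have "x = M \<or> x \<in> (\<lambda>q'. M - p q') ` (R - S) \<or> x \<in> (\<lambda>(q, b). M - Bel q b p) ` Pairs"
      unfolding Dset_def by blast
    then show ?thesis
    proof (elim disjE)
      assume "x = M" then show ?thesis using Mpos by simp
    next
      assume "x \<in> (\<lambda>q'. M - p q') ` (R - S)"
      then obtain q' where q': "q' \<in> R" "q' \<notin> S" "x = M - p q'" by blast
      then have "p q' \<noteq> M" by (simp add: S_def)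
      then show "0 < x" using M_ge[OF q'(1)] q'(3) by simp
    next
      assume "x \<in> (\<lambda>(q, b). M - Bel q b p) ` Pairs"
      then obtain q b where qb: "q \<in> S" "b \<in> A" "b \<notin> Ast q" "x = M - Bel q b p" by (auto simp: Pairs_def)
      then show "0 < x" using F3[OF qb(1-3)] by simp
    qed
  qed
  have "\<delta> \<in> Dset" unfolding \<delta>_def using finD by (intro Min_in) (auto simp: Dset_def)
  then have \<delta>pos: "0 < \<delta>" by (rule allpos)
  have \<delta>M: "\<delta> \<le> M" unfolding \<delta>_def using finD by (simp add: Dset_def)
  have \<delta>RS: "\<delta> \<le> M - p q'" if "q' \<in> R" "q' \<notin> S" for q'
    unfolding \<delta>_def using finD that by (intro Min_le) (auto simp: Dset_def)
  have \<delta>P: "\<delta> \<le> M - Bel q b p" if "q \<in> S" "b \<in> A" "b \<notin> Ast q" for q b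
  proof -
    have "(q, b) \<in> Pairs" using that by (simp add: Pairs_def)
    then have "M - Bel q b p \<in> Dset" unfolding Dset_def by force
    then show ?thesis unfolding \<delta>_def using finD by (intro Min_le)
  qed
  define u where "u = (\<lambda>q. if q \<in> S then M - \<delta> else p q)"
  have u_le_p: "u q \<le> p q" if "q \<in> Q" for q
    using S_props \<delta>pos by (auto simp: u_def)
  have u_R: "u q \<le> M - \<delta>" if "q \<in> Q" "q \<notin> Qm L" for q
  proof (cases "q \<in> S")
    case True then show ?thesis by (simp add: u_def)
  next
    case False
    have "q \<in> R" using that by (simp add: R_def)
    then show ?thesis using \<delta>RS[OF _ False] False by (simp add: u_def)
  qed
  have "p q1 \<le> u q1"
  proof (rule p_le_super)
    show "1 \<le> u q" if "q \<in> T" for q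
    proof -
      have "q \<notin> S" using that T_Qm[of L] SR by (auto simp: R_def)
      then show ?thesis using p_T[OF that] by (simp add: u_def)
    qed
    show "0 \<le> u q" if "q \<in> Q" for q
      using \<delta>M p_bounds(1)[OF that] by (simp add: u_def)
    show "Bel q a u \<le> u q" if qa: "q \<in> Qs" "q \<notin> T" "a \<in> A" for q a
    proof -
      have qQ: "q \<in> Q" using qa(1) Qs_sub by blast
      have Bup: "Bel q a u \<le> Bel q a p" by (rule Bel_mono[OF qQ qa(3) u_le_p])
      show ?thesis
      proof (cases "q \<in> S")
        case False
        then show ?thesis using Bup Bel_le_p[OF qa] by (simp add: u_def)
      next
        case qS: True
        show ?thesis
        proof (cases "a \<in> Ast q")
          case False
          then show ?thesis using Bup \<delta>P[OF qS qa(3) False] qS by (simp add: u_def)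
        next
          case True
          have "Bel q a u \<le> M - \<delta>"
          proof (rule Bel_stuck)
            show "q \<in> Q" "q \<notin> Qm L" using S_props[OF qS] by auto
            show "a \<in> Ast q" by (rule True)
            show "u q' \<le> 1" if "q' \<in> Qm L" for q'
              using u_le_p[of q'] p1[of q'] Qm_sub that by fastforce
            show "u q' \<le> M - \<delta>" if "q' \<in> Q" "q' \<notin> Qm L" for q' by (rule u_R[OF that])
            show "0 \<le> M - \<delta>" using \<delta>M by simp
          qed
          then show ?thesis using qS by (simp add: u_def)
        qed
      qed
    qed
    show "q1 \<in> Q" using S_props[OF q1] by blast
  qed
  then show False using q1 S_props[OF q1] \<delta>pos by (simp add: u_def)
qed

end

locale rmdp2 = rmdp Q A \<Gamma> Qs T qu for Q :: "'q set" and A :: "'a set" and \<Gamma> Qs T qu +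
  fixes \<sigma>s :: "'q \<Rightarrow> 'a"
  assumes \<sigma>s_act: "\<And>q. q \<in> Q \<Longrightarrow> \<sigma>s q \<in> A"
    and \<sigma>s_choice: "\<And>k q. k \<in> {1..mmax} \<Longrightarrow> q \<in> Qm k - Qm (k - 1) \<Longrightarrow>
        \<sigma>s q \<in> Ast q \<and> mass (Qm (k - 1)) q (\<sigma>s q) > 0"
begin

definition Kst :: "('q list \<Rightarrow> 'a \<Rightarrow> 'q \<Rightarrow> real) \<Rightarrow> 'q list \<Rightarrow> 'q \<Rightarrow> real" where
  "Kst \<xi> = Kof (stationary \<sigma>s) \<xi>"

definition v :: "'q \<Rightarrow> real" where
  "v q = (INF \<xi>\<in>Adv. PR (Kst \<xi>) q)"

lemma Kst_app: "Kst \<xi> w = \<xi> w (\<sigma>s (last w))"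
  by (simp add: Kst_def Kof_def stationary_def)

lemma good_st:
  assumes "\<And>q a. q \<in> Q \<Longrightarrow> a \<in> A \<Longrightarrow> G q a \<subseteq> distr Q" "\<xi> \<in> adversaries Q A G"
  shows "good Q (Kst \<xi>)"
  unfolding Kst_def
proof (rule good_gen[OF assms])
  fix w :: "'q list" assume "w \<noteq> []" "set w \<subseteq> Q"
  then have "last w \<in> Q" using last_in_set by blast
  then show "stationary \<sigma>s w \<in> A" using \<sigma>s_act by (simp add: stationary_def)
qed

lemma good_Kst: "\<xi> \<in> Adv \<Longrightarrow> good Q (Kst \<xi>)"
  by (rule good_st[OF Gam_distr])

lemma choice_L:
  assumes "q \<in> Qm L" "q \<notin> T"
  shows "\<exists>j. 1 \<le> j \<and> j \<le> L \<and> q \<in> Qm j \<and> q \<notin> Qm (j - 1) \<and> \<sigma>s q \<in> Ast q \<and> mass (Qm (j - 1)) q (\<sigma>s q) > 0"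
proof -
  obtain j where j: "1 \<le> j" "j \<le> L" "q \<in> Qm j" "q \<notin> Qm (j - 1)" using level[OF assms] by blast
  then have "j \<in> {1..mmax}" using mmax_L by simp
  then have "\<sigma>s q \<in> Ast q \<and> mass (Qm (j - 1)) q (\<sigma>s q) > 0" using \<sigma>s_choice j(3,4) by blast
  then show ?thesis using j by blast
qed

lemma v_bdd: "q \<in> Q \<Longrightarrow> bdd_below ((\<lambda>\<xi>. PR (Kst \<xi>) q) ` Adv)"
proof (rule bdd_belowI[where m=0])
  fix x assume q: "q \<in> Q" and "x \<in> (\<lambda>\<xi>. PR (Kst \<xi>) q) ` Adv"
  then obtain \<xi> where "\<xi> \<in> Adv" "x = PR (Kst \<xi>) q" by blast
  then show "0 \<le> x" using PR_bounds(1)[OF good_Kst q] by simp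
qed

lemma v_lower: "q \<in> Q \<Longrightarrow> \<xi> \<in> Adv \<Longrightarrow> v q \<le> PR (Kst \<xi>) q"
  unfolding v_def by (rule cINF_lower[OF v_bdd])

lemma v_bounds:
  assumes "q \<in> Q"
  shows "0 \<le> v q" "v q \<le> 1"
proof -
  show "0 \<le> v q" unfolding v_def
    by (rule cINF_greatest[OF Adv_ne]) (rule PR_bounds(1)[OF good_Kst assms])
  show "v q \<le> 1"
    using v_lower[OF assms xi0_Adv] PR_bounds(2)[OF good_Kst[OF xi0_Adv] assms] by simp
qed

lemma v_T:
  assumes "q \<in> T"
  shows "v q = 1"
proof -
  have "(\<lambda>\<xi>. PR (Kst \<xi>) q) ` Adv = {1}" using PR_T[OF good_Kst assms] Adv_ne by auto
  then show ?thesis unfolding v_def by simp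
qed

lemma PR_sh_Kst: "PR (shK q (Kst \<xi>)) q' = PR (Kst (\<lambda>w. \<xi> (q # w))) q'"
proof (rule PR_cong)
  fix u :: "'q list" assume "u \<noteq> []"
  then show "shK q (Kst \<xi>) u = Kst (\<lambda>w. \<xi> (q # w)) u" by (simp add: shK_def Kst_app)
qed

lemma v_super:
  assumes q: "q \<in> Qs" "q \<notin> T"
  shows "Bel q (\<sigma>s q) v \<le> v q"
  unfolding v_def[of q]
proof (rule cINF_greatest[OF Adv_ne])
  fix \<xi> assume \<xi>: "\<xi> \<in> Adv"
  have qQ: "q \<in> Q" using q Qs_sub by blast
  define a where "a = \<sigma>s q"
  have aA: "a \<in> A" using \<sigma>s_act[OF qQ] by (simp add: a_def)
  define \<gamma> where "\<gamma> = \<xi> [q] a"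
  have "[q] \<noteq> [] \<and> set [q] \<subseteq> Q \<and> a \<in> A" using qQ aA by simp
  then have "\<xi> [q] a \<in> \<Gamma> (last [q]) a" using \<xi> unfolding adversaries_def by blast
  then have \<gamma>: "\<gamma> \<in> \<Gamma> q a" unfolding \<gamma>_def by simp
  have \<gamma>d: "\<gamma> \<in> distr Q" using Gam_distr[OF qQ aA] \<gamma> by blast
  have K1: "Kst \<xi> [q] = \<gamma>" by (simp add: Kst_app \<gamma>_def a_def)
  have \<xi>': "(\<lambda>w. \<xi> (q # w)) \<in> Adv" by (rule adv_sh[OF \<xi> qQ])
  have "Bel q a v \<le> (\<Sum>q'\<in>Q. \<gamma> q' * v q')" by (rule Bel_lower[OF qQ aA \<gamma>])
  also have "\<dots> \<le> (\<Sum>q'\<in>Q. \<gamma> q' * PR (Kst (\<lambda>w. \<xi> (q # w))) q')"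
    by (rule sum_distr_mono[OF \<gamma>d]) (rule v_lower[OF _ \<xi>'])
  also have "\<dots> = PR (Kst \<xi>) q"
    using PR_step[OF good_Kst[OF \<xi>] q] K1 PR_sh_Kst by simp
  finally show "Bel q (\<sigma>s q) v \<le> PR (Kst \<xi>) q" by (simp add: a_def)
qed

definition \<sigma>st :: "'q list \<Rightarrow> 'a" where
  "\<sigma>st = (\<lambda>w. if \<sigma>s (last w) \<in> A then \<sigma>s (last w) else a0)"

lemma \<sigma>st_strat: "\<sigma>st \<in> strategies A"
  unfolding strategies_def \<sigma>st_def using a0_in by auto

lemma PR_Kst_\<sigma>st: "PR (Kst \<xi>) q = PR (Kof \<sigma>st \<xi>) q"
proof (rule PR_cong)
  fix u :: "'q list" assume "u \<noteq> []" "set u \<subseteq> Q"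
  then have "last u \<in> Q" using last_in_set by blast
  then have "\<sigma>s (last u) \<in> A" by (rule \<sigma>s_act)
  then show "Kst \<xi> u = Kof \<sigma>st \<xi> u" by (simp add: Kst_app Kof_def \<sigma>st_def)
qed

lemma v_eq_Vs: "v q = Vs \<sigma>st q"
  unfolding v_def Vs_def PR_Kst_\<sigma>st by (rule refl)

lemma v_le_p: "q \<in> Q \<Longrightarrow> v q \<le> p q"
  unfolding v_eq_Vs by (rule p_upper[OF \<sigma>st_strat])

lemma p_le_Bel_opt:
  assumes q: "q \<in> Qs" "q \<notin> T" and a: "a \<in> Ast q"
  shows "p q \<le> Bel q a p"
proof -
  have "(SUP \<sigma>\<in>strategies A. Vs \<sigma> q) \<le> Bel q a p"
  proof (rule cSUP_least[OF strat_ne'])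
  fix \<sigma> :: "'q list \<Rightarrow> 'a" assume \<sigma>: "\<sigma> \<in> strategies A"
  have "\<sigma> [q] \<in> A" using \<sigma> by (simp add: strategies_def)
  then have "Bel q (\<sigma> [q]) p \<le> Bel q a p" using a Ast_iff by blast
  then show "Vs \<sigma> q \<le> Bel q a p" using Vs_le_Bel[OF \<sigma> q] by simp
  qed
  then show ?thesis by (simp add: p_def[of q])
qed

lemma p_le_v:
  assumes q0: "q0 \<in> Q"
  shows "p q0 \<le> v q0"
proof (rule ccontr)
  assume contra: "\<not> p q0 \<le> v q0"
  define d where "d = (\<lambda>q. p q - v q)"
  have finD: "finite (d ` Q)" using finQ by simp
  define D where "D = Max (d ` Q)"
  have D_ge: "d q \<le> D" if "q \<in> Q" for q unfolding D_def using finD that by simp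
  have Dpos: "0 < D" using D_ge[OF q0] contra by (simp add: d_def)
  have D_in: "D \<in> d ` Q" unfolding D_def using finD q0 by (intro Max_in) auto
  define Sd where "Sd = {q \<in> Q. d q = D}"
  have Sd_ne: "\<exists>q. q \<in> Sd" using D_in by (auto simp: Sd_def)
  have Sd_props: "q \<in> Q \<and> q \<in> Qs \<and> q \<notin> T \<and> 0 < p q \<and> q \<in> Qm L" if "q \<in> Sd" for q
  proof -
    have qQ: "q \<in> Q" and dq: "d q = D" using that by (auto simp: Sd_def)
    have pq: "0 < p q" using dq Dpos v_bounds(1)[OF qQ] by (simp add: d_def)
    have "q \<in> Qs" using p_unsafe[of q] pq by fastforce
    moreover have "q \<notin> T" using dq Dpos p_T[of q] v_T[of q] by (auto simp: d_def)
    moreover have "q \<in> Qm L" by (rule trap[OF qQ pq])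
    ultimately show ?thesis using qQ pq by blast
  qed
  have exj: "\<exists>j q. q \<in> Sd \<and> q \<in> Qm j" using Sd_ne Sd_props by blast
  define j0 where "j0 = (LEAST j. \<exists>q. q \<in> Sd \<and> q \<in> Qm j)"
  obtain q where qS: "q \<in> Sd" and qj: "q \<in> Qm j0"
    using LeastI_ex[OF exj] unfolding j0_def by blast
  have min: "\<not> (q' \<in> Sd \<and> q' \<in> Qm j)" if "j < j0" for j q'
    using not_less_Least[of j "\<lambda>j. \<exists>q. q \<in> Sd \<and> q \<in> Qm j"] that unfolding j0_def by blast
  have qprops: "q \<in> Q" "q \<in> Qs" "q \<notin> T" "0 < p q" "q \<in> Qm L" using Sd_props[OF qS] by auto
  have j0pos: "1 \<le> j0"
  proof (rule ccontr)
    assume "\<not> 1 \<le> j0"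
    then have "j0 = 0" by simp
    then show False using qj qprops(3) by (simp add: Qm_0)
  qed
  have qnot: "q \<notin> Qm (j0 - 1)" using min[of "j0 - 1" q] qS j0pos by simp
  have j0L: "j0 \<le> L" unfolding j0_def using qS qprops(5) by (intro Least_le) blast
  have "j0 \<in> {1..mmax}" using j0pos j0L mmax_L by simp
  then have ch: "\<sigma>s q \<in> Ast q" "mass (Qm (j0 - 1)) q (\<sigma>s q) > 0"
    using \<sigma>s_choice[of j0 q] qj qnot by auto
  define a where "a = \<sigma>s q"
  have aA: "a \<in> A" using Ast_sub ch(1) by (simp add: a_def)
  define S0 where "S0 = Qm (j0 - 1)"
  define \<beta> where "\<beta> = mass S0 q a"
  have \<beta>pos: "0 < \<beta>" using ch(2) by (simp add: \<beta>_def S0_def a_def)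
  have S0Q: "S0 \<subseteq> Q" unfolding S0_def by (rule Qm_sub)
  have S0_lt: "d q' < D" if "q' \<in> S0" for q'
  proof -
    have "q' \<notin> Sd" using min[of "j0 - 1" q'] that j0pos by (simp add: S0_def)
    then have "d q' \<noteq> D" using that S0Q by (auto simp: Sd_def)
    then show ?thesis using D_ge[of q'] that S0Q by force
  qed
  have S0_ne: "S0 \<noteq> {}"
  proof
    assume "S0 = {}"
    obtain \<gamma> where "\<gamma> \<in> \<Gamma> q a" using Gam_ne[OF qprops(1) aA] by blast
    then have "\<beta> \<le> (\<Sum>q'\<in>S0. \<gamma> q')" unfolding \<beta>_def by (rule mass_lower[OF qprops(1) aA])
    then show False using \<open>S0 = {}\<close> \<beta>pos by simp
  qed
  have finS0: "finite S0" using finQ S0Q finite_subset by blast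
  define D' where "D' = Max (d ` S0)"
  have D'_ge: "d q' \<le> D'" if "q' \<in> S0" for q' unfolding D'_def using finS0 that by simp
  have D'_in: "D' \<in> d ` S0" unfolding D'_def using finS0 S0_ne by (intro Max_in) auto
  have D'lt: "D' < D" using D'_in S0_lt by auto
  define \<eta> where "\<eta> = (D - D') * \<beta>"
  have \<eta>pos: "0 < \<eta>" unfolding \<eta>_def using D'lt \<beta>pos by simp
  have "Bel q a v < Bel q a v + \<eta>" using \<eta>pos by simp
  then obtain \<gamma> where \<gamma>: "\<gamma> \<in> \<Gamma> q a" "(\<Sum>q'\<in>Q. \<gamma> q' * v q') < Bel q a v + \<eta>"
    using Bel_less[OF qprops(1) aA] by blast
  have \<gamma>d: "\<gamma> \<in> distr Q" using Gam_distr[OF qprops(1) aA] \<gamma>(1) by blast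
  have nn: "\<And>x. 0 \<le> \<gamma> x" by (rule distr_nonneg[OF \<gamma>d])
  have pB: "p q \<le> Bel q a p" using p_le_Bel_opt[OF qprops(2,3) ch(1)] by (simp add: a_def)
  have vB: "Bel q a v \<le> v q" using v_super[OF qprops(2,3)] by (simp add: a_def)
  have Bp: "Bel q a p \<le> (\<Sum>q'\<in>Q. \<gamma> q' * p q')" by (rule Bel_lower[OF qprops(1) aA \<gamma>(1)])
  have dsum: "(\<Sum>q'\<in>Q. \<gamma> q' * d q') = (\<Sum>q'\<in>Q. \<gamma> q' * p q') - (\<Sum>q'\<in>Q. \<gamma> q' * v q')"
    by (simp add: d_def right_diff_distrib sum_subtractf)
  define m where "m = (\<Sum>q'\<in>S0. \<gamma> q')"
  have m\<beta>: "\<beta> \<le> m" unfolding m_def \<beta>_def by (rule mass_lower[OF qprops(1) aA \<gamma>(1)])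
  have split: "(\<Sum>q'\<in>Q. \<gamma> q' * d q') = (\<Sum>q'\<in>Q - S0. \<gamma> q' * d q') + (\<Sum>q'\<in>S0. \<gamma> q' * d q')"
    by (rule sum.subset_diff[OF S0Q finQ])
  have splitg: "(\<Sum>q'\<in>Q. \<gamma> q') = (\<Sum>q'\<in>Q - S0. \<gamma> q') + (\<Sum>q'\<in>S0. \<gamma> q')"
    by (rule sum.subset_diff[OF S0Q finQ])
  have rest: "(\<Sum>q'\<in>Q - S0. \<gamma> q') = 1 - m" using splitg distr_sum[OF \<gamma>d] by (simp add: m_def)
  have s1: "(\<Sum>q'\<in>S0. \<gamma> q' * d q') \<le> (\<Sum>q'\<in>S0. \<gamma> q' * D')"
    by (rule sum_mono, rule mult_left_mono[OF D'_ge nn])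
  have s2: "(\<Sum>q'\<in>Q - S0. \<gamma> q' * d q') \<le> (\<Sum>q'\<in>Q - S0. \<gamma> q' * D)"
    by (rule sum_mono, rule mult_left_mono[OF D_ge nn]) simp
  have s3: "(\<Sum>q'\<in>S0. \<gamma> q' * D') = m * D'" by (simp add: m_def sum_distrib_right)
  have s4: "(\<Sum>q'\<in>Q - S0. \<gamma> q' * D) = (1 - m) * D" using rest by (simp add: sum_distrib_right[symmetric])
  have s5: "(D - D') * \<beta> \<le> (D - D') * m" using m\<beta> D'lt by (intro mult_left_mono) auto
  have dqD: "d q = D" using qS by (simp add: Sd_def)
  have "D = p q - v q" using dqD by (simp add: d_def)
  also have "\<dots> < (\<Sum>q'\<in>Q. \<gamma> q' * d q') + \<eta>" using pB vB Bp \<gamma>(2) dsum by linarith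
  also have "\<dots> \<le> m * D' + (1 - m) * D + \<eta>" using split s1 s2 s3 s4 by linarith
  also have "\<dots> = D - (D - D') * m + (D - D') * \<beta>" by (simp add: \<eta>_def algebra_simps)
  also have "\<dots> \<le> D" using s5 by linarith
  finally show False by simp
qed

lemma v_eq_p: "q \<in> Q \<Longrightarrow> v q = p q"
  using v_le_p p_le_v by (simp add: order_antisym)

end

lemma sum_delta_mult:
  assumes "finite Q" "x \<in> Q"
  shows "(\<Sum>q'\<in>Q. f q' * (if q' \<in> {x} then 1 else 0)) = (f x :: real)"
proof -
  have "(\<Sum>q'\<in>Q. f q' * (if q' \<in> {x} then 1 else 0)) = (\<Sum>q'\<in>Q. if q' = x then f q' else 0)"
    by (rule sum.cong) auto
  also have "\<dots> = f x" using assms by simp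
  finally show ?thesis .
qed

context rmdp2 begin

definition Gm :: "'q \<Rightarrow> 'a \<Rightarrow> ('q \<Rightarrow> real) set" where
  "Gm = (\<lambda>q a. if q \<in> T then {dirac qu} else \<Gamma> q a)"

lemma dirac_distr: "dirac qu \<in> distr Q"
  using Gam_qu_dirac[OF a0_in] Gam_distr[OF quQ a0_in] by blast

lemma Gm_distr: "q \<in> Q \<Longrightarrow> a \<in> A \<Longrightarrow> Gm q a \<subseteq> distr Q"
  using dirac_distr Gam_distr by (simp add: Gm_def)

definition cls :: "('q list \<Rightarrow> 'q \<Rightarrow> real) \<Rightarrow> bool" where
  "cls K \<longleftrightarrow> good Q K \<and> (\<forall>w. w \<noteq> [] \<longrightarrow> set w \<subseteq> Q \<longrightarrow> K w \<in> Gm (last w) (\<sigma>s (last w)))"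

lemma cls_Kst:
  assumes "\<xi> \<in> adversaries Q A Gm"
  shows "cls (Kst \<xi>)"
  unfolding cls_def
proof (intro conjI allI impI)
  show "good Q (Kst \<xi>)" by (rule good_st[OF Gm_distr assms])
  fix w :: "'q list" assume w: "w \<noteq> []" "set w \<subseteq> Q"
  then have "last w \<in> Q" using last_in_set by blast
  then have "\<sigma>s (last w) \<in> A" by (rule \<sigma>s_act)
  then have "w \<noteq> [] \<and> set w \<subseteq> Q \<and> \<sigma>s (last w) \<in> A" using w by simp
  then have "\<xi> w (\<sigma>s (last w)) \<in> Gm (last w) (\<sigma>s (last w))" using assms unfolding adversaries_def by blast
  then show "Kst \<xi> w \<in> Gm (last w) (\<sigma>s (last w))" by (simp add: Kst_app)
qed

lemma cls_good: "cls K \<Longrightarrow> good Q K" by (simp add: cls_def)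

lemma cls_sh:
  assumes "cls K" "q \<in> Q"
  shows "cls (shK q K)"
  unfolding cls_def
proof (intro conjI allI impI)
  show "good Q (shK q K)" using good_sh[OF cls_good[OF assms(1)] assms(2)] .
  fix w :: "'q list" assume w: "w \<noteq> []" "set w \<subseteq> Q"
  then have "q # w \<noteq> []" "set (q # w) \<subseteq> Q" using assms(2) by auto
  then have "K (q # w) \<in> Gm (last (q # w)) (\<sigma>s (last (q # w)))" using assms(1) unfolding cls_def by blast
  then show "shK q K w \<in> Gm (last w) (\<sigma>s (last w))" using w(1) by (simp add: shK_def)
qed

lemma cls_Nil: "cls K \<Longrightarrow> q \<in> Q \<Longrightarrow> K [q] \<in> Gm q (\<sigma>s q)"
  unfolding cls_def by (metis last.simps empty_subsetI insert_subset list.set(1) list.set(2) not_Cons_self2)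

lemma cls_T: "cls K \<Longrightarrow> q \<in> T \<Longrightarrow> K [q] = dirac qu"
  using cls_Nil[of K q] T_Q by (auto simp: Gm_def)

lemma cls_nonT: "cls K \<Longrightarrow> q \<in> Q \<Longrightarrow> q \<notin> T \<Longrightarrow> K [q] \<in> \<Gamma> q (\<sigma>s q)"
  using cls_Nil[of K q] by (simp add: Gm_def)

lemma cls_qu: "cls K \<Longrightarrow> K [qu] qu = 1"
proof -
  assume c: "cls K"
  have "qu \<notin> T" using T_sub quQs by blast
  then have "K [qu] \<in> \<Gamma> qu (\<sigma>s qu)" by (rule cls_nonT[OF c quQ])
  then show ?thesis using Gam_qu[OF \<sigma>s_act[OF quQ]] by blast
qed

lemma cls_distr: "cls K \<Longrightarrow> q \<in> Q \<Longrightarrow> K [q] \<in> distr Q"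
  using cls_good by (simp add: good_def)

definition bb :: "('q list \<Rightarrow> 'q \<Rightarrow> real) \<Rightarrow> 'q \<Rightarrow> nat \<Rightarrow> real" where
  "bb K q k = paK Q K q k {qu}"

lemma bb_Suc: "q \<in> Q \<Longrightarrow> bb K q (Suc k) = (\<Sum>q'\<in>Q. K [q] q' * bb (shK q K) q' k)"
  unfolding bb_def by (rule paK_Suc[OF finQ])

lemma bb_0: "q \<in> Q \<Longrightarrow> bb K q 0 = (if q \<in> {qu} then 1 else 0)"
  unfolding bb_def by (rule paK_0)

lemma bb_1:
  assumes "cls K" "q \<in> Q"
  shows "bb K q 1 = K [q] qu"
proof -
  have "bb K q 1 = (\<Sum>q'\<in>Q. K [q] q' * bb (shK q K) q' 0)" using bb_Suc[OF assms(2), of K 0] by simp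
  also have "\<dots> = (\<Sum>q'\<in>Q. K [q] q' * (if q' \<in> {qu} then 1 else 0))"
    by (rule sum.cong[OF refl]) (simp add: bb_0)
  also have "\<dots> = K [q] qu" by (rule sum_delta_mult[OF finQ quQ])
  finally show ?thesis .
qed

lemma bb_bounds: "cls K \<Longrightarrow> q \<in> Q \<Longrightarrow> 0 \<le> bb K q k \<and> bb K q k \<le> 1"
  unfolding bb_def using paK_bounds[OF finQ cls_good] by blast

lemma bb_mono:
  assumes "cls K" "q \<in> Q"
  shows "bb K q k \<le> bb K q (Suc k)"
  using assms
proof (induction k arbitrary: K q)
  case 0
  show ?case
  proof (cases "q = qu")
    case True
    then have "bb K q 1 = 1" using bb_1[OF 0] cls_qu[OF 0(1)] by simp
    then show ?thesis using True bb_0[OF 0(2), of K] by simp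
  next
    case False
    then have "bb K q 0 = 0" using bb_0[OF 0(2), of K] by simp
    then show ?thesis using bb_bounds[OF 0, of 1] by simp
  qed
next
  case (Suc k)
  have "bb K q (Suc k) = (\<Sum>q'\<in>Q. K [q] q' * bb (shK q K) q' k)" by (rule bb_Suc[OF Suc.prems(2)])
  also have "\<dots> \<le> (\<Sum>q'\<in>Q. K [q] q' * bb (shK q K) q' (Suc k))"
  proof (rule sum_distr_mono[OF cls_distr[OF Suc.prems]])
    fix q' assume "q' \<in> Q"
    then show "bb (shK q K) q' k \<le> bb (shK q K) q' (Suc k)"
      by (rule Suc.IH[OF cls_sh[OF Suc.prems]])
  qed
  also have "\<dots> = bb K q (Suc (Suc k))" by (rule bb_Suc[OF Suc.prems(2), symmetric])
  finally show ?case .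
qed

lemma bb_mono_le: "cls K \<Longrightarrow> q \<in> Q \<Longrightarrow> k \<le> k' \<Longrightarrow> bb K q k \<le> bb K q k'"
  by (rule lift_Suc_mono_le[of "bb K q"]) (rule bb_mono)

definition Pairs :: "(nat \<times> 'q) set" where
  "Pairs = {(j, q). j \<in> {1..L} \<and> q \<in> Qm j \<and> q \<notin> Qm (j - 1)}"

definition \<beta> :: real where
  "\<beta> = Min (insert 1 ((\<lambda>(j, q). mass (Qm (j - 1)) q (\<sigma>s q)) ` Pairs))"

lemma finPairs: "finite Pairs"
proof (rule finite_subset)
  show "Pairs \<subseteq> {1..L} \<times> Q" using Qm_sub by (auto simp: Pairs_def)
  show "finite ({1..L} \<times> Q)" using finQ by simp
qed

lemma \<beta>_props: "0 < \<beta>" "\<beta> \<le> 1"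
  "\<And>j q. j \<in> {1..L} \<Longrightarrow> q \<in> Qm j \<Longrightarrow> q \<notin> Qm (j - 1) \<Longrightarrow> \<beta> \<le> mass (Qm (j - 1)) q (\<sigma>s q)"
proof -
  define B where "B = insert 1 ((\<lambda>(j, q). mass (Qm (j - 1)) q (\<sigma>s q)) ` Pairs)"
  have finB: "finite B" using finPairs by (simp add: B_def)
  have pos: "0 < x" if "x \<in> B" for x
  proof -
    from that have "x = 1 \<or> x \<in> (\<lambda>(j, q). mass (Qm (j - 1)) q (\<sigma>s q)) ` Pairs" by (simp add: B_def)
    then show ?thesis
    proof
      assume "x \<in> (\<lambda>(j, q). mass (Qm (j - 1)) q (\<sigma>s q)) ` Pairs"
      then obtain j q where jq: "(j, q) \<in> Pairs" "x = mass (Qm (j - 1)) q (\<sigma>s q)" by auto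
      then have "j \<in> {1..mmax}" "q \<in> Qm j - Qm (j - 1)" using mmax_L by (auto simp: Pairs_def)
      then show ?thesis using \<sigma>s_choice jq(2) by blast
    qed simp
  qed
  have "Min B \<in> B" using finB by (intro Min_in) (auto simp: B_def)
  then show "0 < \<beta>" using pos by (simp add: \<beta>_def B_def)
  show "\<beta> \<le> 1" unfolding \<beta>_def using finB by (intro Min_le) (auto simp: B_def)
  fix j q assume "j \<in> {1..L}" "q \<in> Qm j" "q \<notin> Qm (j - 1)"
  then have "(j, q) \<in> Pairs" by (simp add: Pairs_def)
  then have "mass (Qm (j - 1)) q (\<sigma>s q) \<in> B" unfolding B_def by force
  then show "\<beta> \<le> mass (Qm (j - 1)) q (\<sigma>s q)" unfolding \<beta>_def B_def[symmetric] using finB by (intro Min_le)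
qed

lemma bb_level:
  assumes "j \<le> L" "q \<in> Qm j" "cls K"
  shows "\<beta> ^ j \<le> bb K q (Suc j)"
  using assms
proof (induction j arbitrary: K q)
  case 0
  then have qT: "q \<in> T" by (simp add: Qm_0)
  then have qQ: "q \<in> Q" using T_Q by blast
  have "bb K q 1 = K [q] qu" by (rule bb_1[OF 0(3) qQ])
  also have "\<dots> = 1" using cls_T[OF 0(3) qT] by (simp add: dirac_def)
  finally show ?case by simp
next
  case (Suc j)
  have qQ: "q \<in> Q" using Suc.prems(2) Qm_sub by blast
  have b0: "0 \<le> \<beta>" "\<beta> \<le> 1" using \<beta>_props by auto
  show ?case
  proof (cases "q \<in> Qm j")
    case True
    have "\<beta> ^ Suc j \<le> \<beta> ^ j" by (rule power_decreasing) (use b0 in auto)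
    also have "\<dots> \<le> bb K q (Suc j)" using Suc.IH[OF _ True Suc.prems(3)] Suc.prems(1) by simp
    also have "\<dots> \<le> bb K q (Suc (Suc j))" by (rule bb_mono[OF Suc.prems(3) qQ])
    finally show ?thesis .
  next
    case False
    have qT: "q \<notin> T" using False T_Qm[of j] by blast
    have "Suc j \<in> {1..L}" using Suc.prems(1) by simp
    then have \<beta>m: "\<beta> \<le> mass (Qm j) q (\<sigma>s q)" using \<beta>_props(3)[of "Suc j" q] Suc.prems(2) False by simp
    define \<gamma> where "\<gamma> = K [q]"
    have \<gamma>: "\<gamma> \<in> \<Gamma> q (\<sigma>s q)" unfolding \<gamma>_def by (rule cls_nonT[OF Suc.prems(3) qQ qT])
    have \<gamma>d: "\<gamma> \<in> distr Q" unfolding \<gamma>_def by (rule cls_distr[OF Suc.prems(3) qQ])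
    have nn: "\<And>x. 0 \<le> \<gamma> x" by (rule distr_nonneg[OF \<gamma>d])
    have ms: "mass (Qm j) q (\<sigma>s q) \<le> (\<Sum>q'\<in>Qm j. \<gamma> q')" by (rule mass_lower[OF qQ \<sigma>s_act[OF qQ] \<gamma>])
    have csh: "cls (shK q K)" by (rule cls_sh[OF Suc.prems(3) qQ])
    have "\<beta> ^ Suc j = \<beta> ^ j * \<beta>" by simp
    also have "\<dots> \<le> \<beta> ^ j * (\<Sum>q'\<in>Qm j. \<gamma> q')" using \<beta>m ms b0 by (intro mult_left_mono) auto
    also have "\<dots> = (\<Sum>q'\<in>Qm j. \<gamma> q') * \<beta> ^ j" by (simp add: mult.commute)
    also have "\<dots> = (\<Sum>q'\<in>Qm j. \<gamma> q' * \<beta> ^ j)" by (rule sum_distrib_right)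
    also have "\<dots> \<le> (\<Sum>q'\<in>Qm j. \<gamma> q' * bb (shK q K) q' (Suc j))"
    proof (rule sum_mono)
      fix q' assume q': "q' \<in> Qm j"
      have "\<beta> ^ j \<le> bb (shK q K) q' (Suc j)" using Suc.IH[OF _ q' csh] Suc.prems(1) by simp
      then show "\<gamma> q' * \<beta> ^ j \<le> \<gamma> q' * bb (shK q K) q' (Suc j)" by (rule mult_left_mono[OF _ nn])
    qed
    also have "\<dots> \<le> (\<Sum>q'\<in>Q. \<gamma> q' * bb (shK q K) q' (Suc j))"
    proof (rule sum_mono2[OF finQ Qm_sub])
      fix q' assume "q' \<in> Q - Qm j"
      then have "0 \<le> bb (shK q K) q' (Suc j)" using bb_bounds[OF csh] by blast
      then show "0 \<le> \<gamma> q' * bb (shK q K) q' (Suc j)" using nn by simp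
    qed
    also have "\<dots> = bb K q (Suc (Suc j))" unfolding \<gamma>_def by (rule bb_Suc[OF qQ, symmetric])
    finally show ?thesis .
  qed
qed

definition aa :: "('q list \<Rightarrow> 'q \<Rightarrow> real) \<Rightarrow> 'q \<Rightarrow> nat \<Rightarrow> real" where
  "aa K q k = paK Q K q k (Qm L)"

lemma aa_Suc: "q \<in> Q \<Longrightarrow> aa K q (Suc k) = (\<Sum>q'\<in>Q. K [q] q' * aa (shK q K) q' k)"
  unfolding aa_def by (rule paK_Suc[OF finQ])

lemma drain:
  assumes "cls K" "q \<in> Q"
  shows "bb K q k + \<beta> ^ L * aa K q k \<le> bb K q (k + Suc L)"
  using assms
proof (induction k arbitrary: K q)
  case 0
  show ?case
  proof (cases "q \<in> Qm L")
    case True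
    have "q \<noteq> qu" using True qu_notin_Qm by blast
    then have "bb K q 0 = 0" using bb_0[OF 0(2), of K] by simp
    moreover have "aa K q 0 = 1" using True paK_0[OF 0(2)] by (simp add: aa_def)
    moreover have "\<beta> ^ L \<le> bb K q (Suc L)" by (rule bb_level[OF le_refl True 0(1)])
    ultimately show ?thesis by simp
  next
    case False
    then have "aa K q 0 = 0" using paK_0[OF 0(2)] by (simp add: aa_def)
    moreover have "bb K q 0 \<le> bb K q (Suc L)" by (rule bb_mono_le[OF 0]) simp
    ultimately show ?thesis by simp
  qed
next
  case (Suc k)
  have d: "K [q] \<in> distr Q" by (rule cls_distr[OF Suc.prems])
  have csh: "cls (shK q K)" by (rule cls_sh[OF Suc.prems])
  have "bb K q (Suc k) + \<beta> ^ L * aa K q (Suc k)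
      = (\<Sum>q'\<in>Q. K [q] q' * (bb (shK q K) q' k + \<beta> ^ L * aa (shK q K) q' k))"
    unfolding bb_Suc[OF Suc.prems(2)] aa_Suc[OF Suc.prems(2)]
    by (simp add: distrib_left sum.distrib sum_distrib_left mult.left_commute)
  also have "\<dots> \<le> (\<Sum>q'\<in>Q. K [q] q' * bb (shK q K) q' (k + Suc L))"
  proof (rule sum_distr_mono[OF d])
    fix q' assume "q' \<in> Q"
    then show "bb (shK q K) q' k + \<beta> ^ L * aa (shK q K) q' k \<le> bb (shK q K) q' (k + Suc L)"
      by (rule Suc.IH[OF csh])
  qed
  also have "\<dots> = bb K q (Suc k + Suc L)" using bb_Suc[OF Suc.prems(2), of K "k + Suc L"] by simp
  finally show ?case .
qed

lemma goal2:
  assumes \<xi>: "\<xi> \<in> adversaries Q A Gm" and q: "q \<in> Q"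
  shows "(\<lambda>k. paK Q (Kst \<xi>) q k {q \<in> Q. 0 < p q}) \<longlonglongrightarrow> 0"
proof -
  define K where "K = Kst \<xi>"
  have c: "cls K" unfolding K_def by (rule cls_Kst[OF \<xi>])
  define \<delta> where "\<delta> = \<beta> ^ L"
  have \<delta>pos: "0 < \<delta>" unfolding \<delta>_def using \<beta>_props(1) by simp
  have inc: "incseq (\<lambda>k. bb K q k)" by (rule incseq_SucI) (rule bb_mono[OF c q])
  have bdd: "bdd_above (range (\<lambda>k. bb K q k))"
    by (rule bdd_aboveI[where M=1]) (use bb_bounds[OF c q] in auto)
  have lim: "(\<lambda>k. bb K q k) \<longlonglongrightarrow> (SUP k. bb K q k)" by (rule LIMSEQ_incseq_SUP[OF bdd inc])
  have lim2: "(\<lambda>k. bb K q (k + Suc L)) \<longlonglongrightarrow> (SUP k. bb K q k)" by (rule LIMSEQ_ignore_initial_segment[OF lim])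
  have limd: "(\<lambda>k. (bb K q (k + Suc L) - bb K q k) / \<delta>) \<longlonglongrightarrow> ((SUP k. bb K q k) - (SUP k. bb K q k)) / \<delta>"
    by (intro tendsto_divide tendsto_diff lim lim2 tendsto_const) (use \<delta>pos in simp)
  then have limd0: "(\<lambda>k. (bb K q (k + Suc L) - bb K q k) / \<delta>) \<longlonglongrightarrow> 0" by simp
  have reach_sub: "{q \<in> Q. 0 < p q} \<subseteq> Qm L" using trap by blast
  have lower: "0 \<le> paK Q K q k {q \<in> Q. 0 < p q}" for k
    using paK_bounds(1)[OF finQ cls_good[OF c] q] by blast
  have upper: "paK Q K q k {q \<in> Q. 0 < p q} \<le> (bb K q (k + Suc L) - bb K q k) / \<delta>" for k
  proof -
    have "paK Q K q k {q \<in> Q. 0 < p q} \<le> aa K q k"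
      unfolding aa_def paK_def
    proof (rule sum_mono)
      fix w assume "w \<in> paths Q q k"
      then have "0 \<le> ppK K w" using ppK_nonneg[OF cls_good[OF c]] by (auto simp: paths_def)
      then show "(if last w \<in> {q \<in> Q. 0 < p q} then ppK K w else 0) \<le> (if last w \<in> Qm L then ppK K w else 0)"
        using reach_sub by auto
    qed
    also have "\<dots> \<le> (bb K q (k + Suc L) - bb K q k) / \<delta>"
      using drain[OF c q, of k] \<delta>pos by (simp add: \<delta>_def pos_le_divide_eq mult.commute)
    finally show ?thesis .
  qed
  show ?thesis unfolding K_def[symmetric]
    by (rule real_tendsto_sandwich[OF _ _ tendsto_const limd0]) (use lower upper in auto)
qed

end

lemma gamma_exists:
  fixes l u :: "'q \<Rightarrow> real"
  assumes fin: "finite Q" and b: "\<And>x. x \<in> Q \<Longrightarrow> 0 \<le> l x \<and> l x \<le> u x \<and> u x \<le> 1"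
    and sl: "sum l Q \<le> 1" and su: "1 \<le> sum u Q"
  shows "\<exists>\<gamma>\<in>distr Q. \<forall>x\<in>Q. l x \<le> \<gamma> x \<and> \<gamma> x \<le> u x"
proof -
  define Sl where "Sl = sum l Q"
  define Su where "Su = sum u Q"
  define t where "t = (if Su = Sl then 0 else (1 - Sl) / (Su - Sl))"
  have SlSu: "Sl \<le> Su" unfolding Sl_def Su_def by (rule sum_mono) (use b in auto)
  have t0: "0 \<le> t" unfolding t_def using SlSu sl su by (auto simp: Sl_def Su_def)
  have t1: "t \<le> 1" unfolding t_def using SlSu sl su by (auto simp: Sl_def Su_def field_simps)
  define \<gamma> where "\<gamma> = (\<lambda>x. if x \<in> Q then l x + t * (u x - l x) else 0)"
  have "sum \<gamma> Q = (\<Sum>x\<in>Q. l x + t * (u x - l x))" unfolding \<gamma>_def by (rule sum.cong) auto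
  also have "\<dots> = Sl + t * (Su - Sl)"
    by (simp add: Sl_def Su_def sum.distrib sum_distrib_left sum_subtractf right_diff_distrib)
  also have "\<dots> = 1"
  proof (cases "Su = Sl")
    case True then show ?thesis using sl su by (simp add: t_def Sl_def Su_def)
  next
    case False then have "Su - Sl \<noteq> 0" by simp
    then show ?thesis by (simp add: t_def False)
  qed
  finally have s1: "sum \<gamma> Q = 1" .
  have nn: "0 \<le> \<gamma> x" for x
  proof (cases "x \<in> Q")
    case True
    then have "0 \<le> l x" "0 \<le> t * (u x - l x)" using b[OF True] t0 by auto
    then show ?thesis using True by (simp add: \<gamma>_def)
  qed (simp add: \<gamma>_def)
  have "\<gamma> \<in> distr Q" unfolding distr_def using s1 nn by (auto simp: \<gamma>_def)
  moreover have "\<forall>x\<in>Q. l x \<le> \<gamma> x \<and> \<gamma> x \<le> u x"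
  proof
    fix x assume x: "x \<in> Q"
    have d: "0 \<le> u x - l x" using b[OF x] by simp
    have "t * (u x - l x) \<le> 1 * (u x - l x)" by (rule mult_right_mono[OF t1 d])
    moreover have "0 \<le> t * (u x - l x)" using t0 d by simp
    ultimately show "l x \<le> \<gamma> x \<and> \<gamma> x \<le> u x" using x by (simp add: \<gamma>_def)
  qed
  ultimately show ?thesis by blast
qed

lemma set_cost_nonneg:
  assumes "x \<noteq> {}" "y \<noteq> {}"
  shows "0 \<le> set_cost s x y"
  unfolding set_cost_def
proof (rule cInf_greatest)
  show "{norm (a - b) powr s |a b. a \<in> x \<and> b \<in> y} \<noteq> {}" using assms by blast
  fix z assume "z \<in> {norm (a - b) powr s |a b. a \<in> x \<and> b \<in> y}"
  then show "0 \<le> z" by auto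
qed

lemma set_cost_self:
  assumes "x \<noteq> {}"
  shows "set_cost s x x = 0"
  unfolding set_cost_def
proof (rule cInf_eq_minimum)
  obtain a where "a \<in> x" using assms by blast
  then show "0 \<in> {norm (a - b) powr s |a b. a \<in> x \<and> b \<in> x}" by force
  fix z assume "z \<in> {norm (a - b) powr s |a b. a \<in> x \<and> b \<in> x}"
  then show "0 \<le> z" by auto
qed

lemma transport_self:
  fixes Q :: "'v::real_normed_vector set set"
  assumes fin: "finite Q" and ne: "\<And>x. x \<in> Q \<Longrightarrow> x \<noteq> {}" and g: "\<gamma> \<in> distr Q"
  shows "transport_cost Q (set_cost s) \<gamma> \<gamma> \<le> 0"
proof -
  define \<pi> where "\<pi> = (\<lambda>x y. if x = y \<and> x \<in> Q then \<gamma> x else 0)"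
  have nn: "\<And>x. 0 \<le> \<gamma> x" by (rule distr_nonneg[OF g])
  have \<pi>c: "\<pi> \<in> couplings Q \<gamma> \<gamma>"
    unfolding couplings_def
  proof (intro CollectI conjI allI ballI impI)
    fix x y show "0 \<le> \<pi> x y" using nn by (simp add: \<pi>_def)
  next
    fix x y assume "(x, y) \<notin> Q \<times> Q" then show "\<pi> x y = 0" by (auto simp: \<pi>_def)
  next
    fix x assume x: "x \<in> Q"
    have "(\<Sum>y\<in>Q. \<pi> x y) = (\<Sum>y\<in>Q. if y = x then \<gamma> x else 0)" by (rule sum.cong) (auto simp: \<pi>_def x)
    then show "(\<Sum>y\<in>Q. \<pi> x y) = \<gamma> x" using x fin by simp
  next
    fix y assume y: "y \<in> Q"
    have "(\<Sum>x\<in>Q. \<pi> x y) = (\<Sum>x\<in>Q. if x = y then \<gamma> y else 0)" by (rule sum.cong) (auto simp: \<pi>_def y)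
    then show "(\<Sum>x\<in>Q. \<pi> x y) = \<gamma> y" using y fin by simp
  qed
  have cost0: "(\<Sum>x\<in>Q. \<Sum>y\<in>Q. \<pi> x y * set_cost s x y) = 0"
  proof (rule sum.neutral, rule ballI, rule sum.neutral, rule ballI)
    fix x y assume x: "x \<in> Q" and y: "y \<in> Q"
    show "\<pi> x y * set_cost s x y = 0"
    proof (cases "x = y")
      case True then show ?thesis using set_cost_self[OF ne[OF x]] by simp
    next
      case False then show ?thesis by (simp add: \<pi>_def)
    qed
  qed
  have bdd: "bdd_below {\<Sum>x\<in>Q. \<Sum>y\<in>Q. \<pi>' x y * set_cost s x y |\<pi>'. \<pi>' \<in> couplings Q \<gamma> \<gamma>}"
  proof (rule bdd_belowI[where m=0])
    fix z assume "z \<in> {\<Sum>x\<in>Q. \<Sum>y\<in>Q. \<pi>' x y * set_cost s x y |\<pi>'. \<pi>' \<in> couplings Q \<gamma> \<gamma>}"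
    then obtain \<pi>' where p: "\<pi>' \<in> couplings Q \<gamma> \<gamma>" "z = (\<Sum>x\<in>Q. \<Sum>y\<in>Q. \<pi>' x y * set_cost s x y)" by blast
    have "0 \<le> \<pi>' x y * set_cost s x y" if "x \<in> Q" "y \<in> Q" for x y
    proof -
      have "0 \<le> \<pi>' x y" using p(1) by (simp add: couplings_def)
      moreover have "0 \<le> set_cost s x y" by (rule set_cost_nonneg[OF ne[OF that(1)] ne[OF that(2)]])
      ultimately show ?thesis by simp
    qed
    then show "0 \<le> z" unfolding p(2) by (intro sum_nonneg) auto
  qed
  have "transport_cost Q (set_cost s) \<gamma> \<gamma> \<le> (\<Sum>x\<in>Q. \<Sum>y\<in>Q. \<pi> x y * set_cost s x y)"
    unfolding transport_cost_def by (rule cInf_lower[OF _ bdd]) (use \<pi>c in blast)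
  then show ?thesis using cost0 by simp
qed


theorem theorem2:
  fixes f :: "nat \<Rightarrow> real^'n \<Rightarrow> real^'n"
    and pv :: "(real^'n) measure"
    and s eps :: real and m :: nat
    and X Xtgt :: "(real^'n) set"
    and Qsafe :: "(real^'n) set set"
    and Pl Pu :: "(real^'n) set \<Rightarrow> nat \<Rightarrow> (real^'n) set \<Rightarrow> real"
    and \<sigma>s :: "(real^'n) set \<Rightarrow> nat"
  defines "A \<equiv> {1..m}"
    and "qu \<equiv> - X"
    and "Q \<equiv> insert (- X) Qsafe"
    and "Qtgt \<equiv> {q \<in> Qsafe. q \<subseteq> Xtgt}"
    and "\<Gamma> \<equiv> Gamma_amb (insert (- X) Qsafe) Qsafe (set_cost s) eps s Pl Pu"
    and "pinf \<equiv> p_low (insert (- X) Qsafe) {1..m} (Gamma_amb (insert (- X) Qsafe) Qsafe (set_cost s) eps s Pl Pu) Qsafe {q \<in> Qsafe. q \<subseteq> Xtgt}"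
    and "Qreach \<equiv> {q\<in>(insert (- X) Qsafe). p_low (insert (- X) Qsafe) {1..m} (Gamma_amb (insert (- X) Qsafe) Qsafe (set_cost s) eps s Pl Pu) Qsafe {q \<in> Qsafe. q \<subseteq> Xtgt} q > 0}"
    and "Ast \<equiv> opt_actions (insert (- X) Qsafe) {1..m} (Gamma_amb (insert (- X) Qsafe) Qsafe (set_cost s) eps s Pl Pu) (p_low (insert (- X) Qsafe) {1..m} (Gamma_amb (insert (- X) Qsafe) Qsafe (set_cost s) eps s Pl Pu) Qsafe {q \<in> Qsafe. q \<subseteq> Xtgt})"
    and "Qm \<equiv> Qlev (insert (- X) Qsafe) (Gamma_amb (insert (- X) Qsafe) Qsafe (set_cost s) eps s Pl Pu) (opt_actions (insert (- X) Qsafe) {1..m} (Gamma_amb (insert (- X) Qsafe) Qsafe (set_cost s) eps s Pl Pu) (p_low (insert (- X) Qsafe) {1..m} (Gamma_amb (insert (- X) Qsafe) Qsafe (set_cost s) eps s Pl Pu) Qsafe {q \<in> Qsafe. q \<subseteq> Xtgt})) {q \<in> Qsafe. q \<subseteq> Xtgt}"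
    and "mmax \<equiv> (LEAST k. k \<ge> 1 \<and> Qlev (insert (- X) Qsafe) (Gamma_amb (insert (- X) Qsafe) Qsafe (set_cost s) eps s Pl Pu) (opt_actions (insert (- X) Qsafe) {1..m} (Gamma_amb (insert (- X) Qsafe) Qsafe (set_cost s) eps s Pl Pu) (p_low (insert (- X) Qsafe) {1..m} (Gamma_amb (insert (- X) Qsafe) Qsafe (set_cost s) eps s Pl Pu) Qsafe {q \<in> Qsafe. q \<subseteq> Xtgt})) {q \<in> Qsafe. q \<subseteq> Xtgt} k
                  = Qlev (insert (- X) Qsafe) (Gamma_amb (insert (- X) Qsafe) Qsafe (set_cost s) eps s Pl Pu) (opt_actions (insert (- X) Qsafe) {1..m} (Gamma_amb (insert (- X) Qsafe) Qsafe (set_cost s) eps s Pl Pu) (p_low (insert (- X) Qsafe) {1..m} (Gamma_amb (insert (- X) Qsafe) Qsafe (set_cost s) eps s Pl Pu) Qsafe {q \<in> Qsafe. q \<subseteq> Xtgt})) {q \<in> Qsafe. q \<subseteq> Xtgt} (k - 1))"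
  assumes s_ge: "s \<ge> 1" and eps_ge: "eps \<ge> 0" and m_ge: "m \<ge> 1"
    and f_cont: "\<forall>u\<in>A. continuous_on UNIV (f u)"
    and pv_prob: "prob_space pv" and pv_sets: "sets pv = sets borel"
    and pv_moment: "(\<integral>\<^sup>+ v. ennreal (norm v powr s) \<partial>pv) < \<infinity>"
    and X_bdd: "bounded X" and X_borel: "X \<in> sets borel" and Xtgt_sub: "Xtgt \<subseteq> X"
    and Qsafe_fin: "finite Qsafe"
    and Qsafe_cells: "\<forall>q\<in>Qsafe. q \<in> sets borel \<and> q \<noteq> {}"
    and Qsafe_disj: "disjoint Qsafe" and Qsafe_union: "\<Union>Qsafe = X"
    and Qsafe_tgt: "\<forall>q\<in>Qsafe. q \<subseteq> Xtgt \<or> q \<inter> Xtgt = {}"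
    and P_range: "\<forall>q\<in>Q. \<forall>a\<in>A. \<forall>q'\<in>Q. 0 \<le> Pl q a q' \<and> Pl q a q' \<le> Pu q a q' \<and> Pu q a q' \<le> 1"
    and P_sums: "\<forall>q\<in>Q. \<forall>a\<in>A. (\<Sum>q'\<in>Q. Pl q a q') \<le> 1 \<and> 1 \<le> (\<Sum>q'\<in>Q. Pu q a q')"
    and P_sound: "\<forall>q\<in>Qsafe. \<forall>a\<in>A. \<forall>q'\<in>Q.
         Pl q a q' \<le> (INF x\<in>q. trans_prob (f a) pv q' x) \<and> (SUP x\<in>q. trans_prob (f a) pv q' x) \<le> Pu q a q'"
    and P_unsafe: "\<forall>a\<in>A. Pl qu a qu = 1 \<and> Pu qu a qu = 1"
    and \<sigma>s_act: "\<forall>q\<in>Q. \<sigma>s q \<in> A"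
    and \<sigma>s_choice: "\<forall>k\<in>{1..mmax}. \<forall>q \<in> Qm k - Qm (k - 1).
         \<sigma>s q \<in> Ast q \<and> (INF \<gamma>\<in>\<Gamma> q (\<sigma>s q). \<Sum>q'\<in>Qm (k - 1). \<gamma> q') > 0"
  shows "(\<forall>q\<in>Q. (INF \<xi>\<in>adversaries Q A \<Gamma>. P_reach Q Qsafe Qtgt q (stationary \<sigma>s) \<xi>)
                = pinf q)
       \<and> (\<forall>q\<in>Q. \<forall>\<xi>\<in>adversaries Q A (\<lambda>q a. if q \<in> Qtgt then {dirac qu} else \<Gamma> q a).
            (\<lambda>k. prob_at Q (stationary \<sigma>s) \<xi> q k Qreach)
              \<longlonglongrightarrow> 0)"
  proof -
  have Qd: "Q = insert (- X) Qsafe" by (simp add: Q_def)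
  have Ad: "A = {1..m}" by (simp add: A_def)
  have qud: "qu = - X" by (simp add: qu_def)
  have Td: "Qtgt = {q \<in> Qsafe. q \<subseteq> Xtgt}" by (simp add: Qtgt_def)
  have Gd: "\<Gamma> = Gamma_amb Q Qsafe (set_cost s) eps s Pl Pu" by (simp add: \<Gamma>_def Q_def)
  have finQ: "finite Q" using Qsafe_fin by (simp add: Qd)
  have Xne: "- X \<noteq> {}"
  proof
    assume "- X = {}"
    then have "X = UNIV" by blast
    then show False using X_bdd by simp
  qed
  have quQs: "qu \<notin> Qsafe"
  proof
    assume "qu \<in> Qsafe"
    then have "- X \<subseteq> X" using Qsafe_union qud by blast
    then show False using Xne by blast
  qed
  have quQ: "qu \<in> Q" by (simp add: Qd qud)
  have cells: "x \<noteq> {}" if "x \<in> Q" for x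
    using that Qsafe_cells Xne by (auto simp: Qd)
  have AA: "finite A" "A \<noteq> {}" using m_ge by (auto simp: Ad)
  have Gh_ne: "Gamma_hat Q Pl Pu q a \<noteq> {}" if q: "q \<in> Q" and a: "a \<in> A" for q a
  proof -
    have "\<exists>\<gamma>\<in>distr Q. \<forall>x\<in>Q. Pl q a x \<le> \<gamma> x \<and> \<gamma> x \<le> Pu q a x"
    proof (rule gamma_exists[OF finQ])
      show "0 \<le> Pl q a x \<and> Pl q a x \<le> Pu q a x \<and> Pu q a x \<le> 1" if "x \<in> Q" for x
        using P_range q a that by blast
      show "sum (Pl q a) Q \<le> 1" "1 \<le> sum (Pu q a) Q" using P_sums q a by blast+
    qed
    then show ?thesis unfolding Gamma_hat_def by blast
  qed
  have Gh_distr: "Gamma_hat Q Pl Pu q a \<subseteq> distr Q" for q a unfolding Gamma_hat_def by blast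
  have G_distr: "\<Gamma> q a \<subseteq> distr Q" if "q \<in> Q" "a \<in> A" for q a
    using Gh_distr[of q a] unfolding Gd Gamma_amb_def by auto
  have G_ne: "\<Gamma> q a \<noteq> {}" if q: "q \<in> Q" and a: "a \<in> A" for q a
  proof (cases "q \<in> Qsafe")
    case True
    obtain \<gamma> where g: "\<gamma> \<in> Gamma_hat Q Pl Pu q a" using Gh_ne[OF q a] by blast
    have gd: "\<gamma> \<in> distr Q" using g Gh_distr by blast
    have "transport_cost Q (set_cost s) \<gamma> \<gamma> \<le> 0" by (rule transport_self[OF finQ cells gd])
    also have "0 \<le> eps powr s" by simp
    finally have "\<gamma> \<in> \<Gamma> q a" using True g gd unfolding Gd Gamma_amb_def by auto
    then show ?thesis by blast
  next
    case False
    then show ?thesis using Gh_ne[OF q a] unfolding Gd Gamma_amb_def by simp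
  qed
  have G_qu: "\<gamma> qu = 1" if a: "a \<in> A" and g: "\<gamma> \<in> \<Gamma> qu a" for a \<gamma>
  proof -
    have "\<gamma> \<in> Gamma_hat Q Pl Pu qu a" using g quQs unfolding Gd Gamma_amb_def by simp
    then have "\<gamma> \<in> distr Q" "Pl qu a qu \<le> \<gamma> qu" using quQ unfolding Gamma_hat_def by auto
    moreover have "Pl qu a qu = 1" using P_unsafe a by blast
    moreover have "\<gamma> qu \<le> 1" by (rule distr_le1[OF finQ \<open>\<gamma> \<in> distr Q\<close>])
    ultimately show ?thesis by simp
  qed
  have G_dirac: "dirac qu \<in> \<Gamma> qu a" if a: "a \<in> A" for a
  proof -
    have dd: "dirac qu \<in> distr Q"
      unfolding distr_def
    proof (intro CollectI conjI allI impI)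
      fix x show "0 \<le> dirac qu x" by (simp add: dirac_def)
    next
      fix x assume "x \<notin> Q" then show "dirac qu x = 0" using quQ by (auto simp: dirac_def)
    next
      show "sum (dirac qu) Q = 1" using finQ quQ by (simp add: dirac_def)
    qed
    have Pl1: "Pl qu a qu = 1" "Pu qu a qu = 1" using P_unsafe a by blast+
    have bnds: "Pl qu a x \<le> dirac qu x \<and> dirac qu x \<le> Pu qu a x" if x: "x \<in> Q" for x
    proof (cases "x = qu")
      case True then show ?thesis using Pl1 by (simp add: dirac_def)
    next
      case False
      have r: "0 \<le> Pl qu a y \<and> Pl qu a y \<le> Pu qu a y \<and> Pu qu a y \<le> 1" if "y \<in> Q" for y
        using P_range quQ a that by blast
      have "sum (Pl qu a) Q = Pl qu a qu + sum (Pl qu a) (Q - {qu})"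
        by (rule sum.remove[OF finQ quQ])
      moreover have "Pl qu a x \<le> sum (Pl qu a) (Q - {qu})"
        by (rule member_le_sum) (use x False r finQ in auto)
      moreover have "sum (Pl qu a) Q \<le> 1" using P_sums quQ a by blast
      ultimately have "Pl qu a x \<le> 0" using Pl1 by simp
      then show ?thesis using False r[OF x] by (simp add: dirac_def)
    qed
    have "dirac qu \<in> Gamma_hat Q Pl Pu qu a" unfolding Gamma_hat_def using dd bnds by blast
    then show ?thesis using quQs unfolding Gd Gamma_amb_def by simp
  qed
  have r: "rmdp Q A \<Gamma> Qsafe Qtgt qu"
  proof (unfold_locales)
    show "finite Q" by (rule finQ)
    show "qu \<in> Q" by (rule quQ)
    show "qu \<notin> Qsafe" by (rule quQs)
    show "Qsafe \<subseteq> Q" by (auto simp: Qd)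
    show "Qtgt \<subseteq> Qsafe" by (auto simp: Td)
    show "finite A" "A \<noteq> {}" by (rule AA(1), rule AA(2))
    show "\<And>q a. q \<in> Q \<Longrightarrow> a \<in> A \<Longrightarrow> \<Gamma> q a \<noteq> {}" by (rule G_ne)
    show "\<And>q a. q \<in> Q \<Longrightarrow> a \<in> A \<Longrightarrow> \<Gamma> q a \<subseteq> distr Q" by (rule G_distr)
    show "\<And>a \<gamma>. a \<in> A \<Longrightarrow> \<gamma> \<in> \<Gamma> qu a \<Longrightarrow> \<gamma> qu = 1" by (rule G_qu)
    show "\<And>a. a \<in> A \<Longrightarrow> dirac qu \<in> \<Gamma> qu a" by (rule G_dirac)
  qed
  interpret R0: rmdp Q A \<Gamma> Qsafe Qtgt qu by (rule r)
  have pe: "p_low Q A \<Gamma> Qsafe Qtgt = R0.p" by (rule ext, rule R0.p_eq)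
  have "pinf = p_low Q A \<Gamma> Qsafe Qtgt"
    unfolding pinf_def Q_def A_def \<Gamma>_def Qtgt_def by (rule refl)
  then have pinf_eq: "pinf = R0.p" unfolding pe .
  have "Ast = opt_actions Q A \<Gamma> (p_low Q A \<Gamma> Qsafe Qtgt)"
    unfolding Ast_def Q_def A_def \<Gamma>_def Qtgt_def by (rule refl)
  then have Ast_eq: "Ast = R0.Ast" unfolding pe R0.Ast_def .
  have "Qm = Qlev Q \<Gamma> Ast Qtgt"
    unfolding Qm_def Ast_def Q_def A_def \<Gamma>_def Qtgt_def by (rule refl)
  then have Qm_eq: "Qm = R0.Qm" unfolding Ast_eq R0.Qm_def .
  have "mmax = (LEAST k. k \<ge> 1 \<and> Qm k = Qm (k - 1))"
    unfolding mmax_def Qm_def Ast_def Q_def A_def \<Gamma>_def Qtgt_def by (rule refl)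
  then have mmax_eq: "mmax = R0.mmax" unfolding Qm_eq R0.mmax_def .
  have "Qreach = {q \<in> Q. p_low Q A \<Gamma> Qsafe Qtgt q > 0}"
    unfolding Qreach_def Q_def A_def \<Gamma>_def Qtgt_def by (rule refl)
  then have Qreach_eq: "Qreach = {q \<in> Q. 0 < R0.p q}" unfolding pe .
  have r2: "rmdp2 Q A \<Gamma> Qsafe Qtgt qu \<sigma>s"
  proof (rule rmdp2.intro[OF r], rule rmdp2_axioms.intro)
    show "\<And>q. q \<in> Q \<Longrightarrow> \<sigma>s q \<in> A" using \<sigma>s_act by blast
    fix k q assume k: "k \<in> {1..R0.mmax}" and q: "q \<in> R0.Qm k - R0.Qm (k - 1)"
    have "\<sigma>s q \<in> Ast q \<and> (INF \<gamma>\<in>\<Gamma> q (\<sigma>s q). \<Sum>q'\<in>Qm (k - 1). \<gamma> q') > 0"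
      using \<sigma>s_choice k q unfolding mmax_eq Qm_eq by blast
    then show "\<sigma>s q \<in> R0.Ast q \<and> 0 < R0.mass (R0.Qm (k - 1)) q (\<sigma>s q)"
      unfolding Ast_eq Qm_eq R0.mass_def by blast
  qed
  interpret R: rmdp2 Q A \<Gamma> Qsafe Qtgt qu \<sigma>s by (rule r2)
  have part1: "(INF \<xi>\<in>adversaries Q A \<Gamma>. P_reach Q Qsafe Qtgt q (stationary \<sigma>s) \<xi>) = pinf q" if q: "q \<in> Q" for q
  proof -
    have "(INF \<xi>\<in>adversaries Q A \<Gamma>. P_reach Q Qsafe Qtgt q (stationary \<sigma>s) \<xi>) = R.v q"
      unfolding R.v_def R.Kst_def R0.P_reach_eq by (rule refl)
    also have "\<dots> = R0.p q" by (rule R.v_eq_p[OF q])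
    finally show ?thesis by (simp add: pinf_eq)
  qed
  have part2: "(\<lambda>k. prob_at Q (stationary \<sigma>s) \<xi> q k Qreach) \<longlonglongrightarrow> 0"
    if q: "q \<in> Q" and \<xi>: "\<xi> \<in> adversaries Q A (\<lambda>q a. if q \<in> Qtgt then {dirac qu} else \<Gamma> q a)" for q \<xi>
  proof -
    have \<xi>': "\<xi> \<in> adversaries Q A R.Gm" using \<xi> by (simp add: R.Gm_def)
    have "(\<lambda>k. prob_at Q (stationary \<sigma>s) \<xi> q k Qreach) = (\<lambda>k. paK Q (R.Kst \<xi>) q k {q \<in> Q. 0 < R0.p q})"
      unfolding prob_at_eq Qreach_eq R.Kst_def Kof_def by (rule refl)
    then show ?thesis using R.goal2[OF \<xi>' q] by simp
  qed
  show ?thesis using part1 part2 by blast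
qed


end
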